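(* Let $\mathscr{M}$ be a von Neumann algebra. A unitary $U \in \mathscr{M}$ can be written as the product of two symmetries in $\mathscr{M}$ if and only if there is a unitary $W \in \mathscr{M}$ such that $U^* = W^*UW$, i.e. $U$ and $U^*$ are unitarily equivalent in $\mathscr{M}$.
   Context: A symmetry is a self-adjoint unitary. *)

theory Defs
  imports "HOL-Analysis.Analysis"
begin

class complex_vector = real_vector +
  fixes scaleC :: "complex \<Rightarrow> 'a \<Rightarrow> 'a" (infixr \<open>*\<^sub>C\<close> 75)
  assumes scaleC_add_right: "a *\<^sub>C (x + y) = a *\<^sub>C x + a *\<^sub>C y"
    and scaleC_add_left: "(a + b) *\<^sub>C x = a *\<^sub>C x + b *\<^sub>C x"
    and scaleC_scaleC: "a *\<^sub>C (b *\<^sub>C x) = (a * b) *\<^sub>C x"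
    and scaleC_one: "1 *\<^sub>C x = x"
    and scaleR_scaleC: "scaleR r x = (complex_of_real r) *\<^sub>C x"

class complex_inner = complex_vector + real_normed_vector +
  fixes cinner :: "'a \<Rightarrow> 'a \<Rightarrow> complex"
  assumes cinner_commute: "cinner x y = cnj (cinner y x)"
    and cinner_add_left: "cinner (x + y) z = cinner x z + cinner y z"
    and cinner_scaleC_left: "cinner (a *\<^sub>C x) y = cnj a * cinner x y"
    and cinner_nonneg: "0 \<le> Re (cinner x x)"
    and cinner_eq_zero_iff: "cinner x x = 0 \<longleftrightarrow> x = 0"
    and norm_eq_sqrt_cinner: "norm x = sqrt (Re (cinner x x))"

class chilbert_space = complex_inner + complete_space

definition bounded_clinear :: "('a::chilbert_space \<Rightarrow> 'a) \<Rightarrow> bool" where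
  "bounded_clinear T \<longleftrightarrow> bounded_linear T \<and> (\<forall>c x. T (c *\<^sub>C x) = c *\<^sub>C T x)"

text \<open>The Hilbert-space adjoint of a bounded operator (unique by non-degeneracy of the
  inner product; exists by the Riesz representation theorem).\<close>
definition adj :: "('a::chilbert_space \<Rightarrow> 'a) \<Rightarrow> ('a \<Rightarrow> 'a)" where
  "adj T = (SOME S. bounded_clinear S \<and> (\<forall>x y. cinner (T x) y = cinner x (S y)))"

definition unitary :: "('a::chilbert_space \<Rightarrow> 'a) \<Rightarrow> bool" where
  "unitary U \<longleftrightarrow> bounded_clinear U \<and> adj U \<circ> U = id \<and> U \<circ> adj U = id"

definition symmetry :: "('a::chilbert_space \<Rightarrow> 'a) \<Rightarrow> bool" where
  "symmetry S \<longleftrightarrow> unitary S \<and> adj S = S"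

definition commutant :: "('a::chilbert_space \<Rightarrow> 'a) set \<Rightarrow> ('a \<Rightarrow> 'a) set" where
  "commutant A = {T. bounded_clinear T \<and> (\<forall>X\<in>A. T \<circ> X = X \<circ> T)}"

text \<open>A von Neumann algebra on the Hilbert space: a self-adjoint set of bounded operators
  equal to its double commutant (equivalently, by von Neumann's double commutant theorem,
  a weak-operator closed unital *-subalgebra of B(H)).\<close>
definition von_neumann_algebra :: "('a::chilbert_space \<Rightarrow> 'a) set \<Rightarrow> bool" where
  "von_neumann_algebra M \<longleftrightarrow>
     (\<forall>T\<in>M. bounded_clinear T \<and> adj T \<in> M) \<and> commutant (commutant M) = M"

end

theory Submission
  imports Defs "HOL-Computational_Algebra.Formal_Power_Series"
begin


subclass (in chilbert_space) banach ..


lemma cinner_add_right: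
  fixes x y z :: "'a::complex_inner"
  shows "cinner x (y + z) = cinner x y + cinner x z"
proof -
  have "cinner x (y + z) = cnj (cinner (y + z) x)" by (rule cinner_commute)
  also have "\<dots> = cnj (cinner y x) + cnj (cinner z x)" by (simp add: cinner_add_left)
  also have "\<dots> = cinner x y + cinner x z" by (simp add: cinner_commute[of x y] cinner_commute[of x z])
  finally show ?thesis .
qed

lemma cinner_scaleC_right:
  fixes x y z :: "'a::complex_inner"
  shows "cinner x (a *\<^sub>C y) = a * cinner x y"
proof -
  have "cinner x (a *\<^sub>C y) = cnj (cinner (a *\<^sub>C y) x)" by (rule cinner_commute)
  also have "\<dots> = a * cnj (cinner y x)" by (simp add: cinner_scaleC_left)
  also have "\<dots> = a * cinner x y" by (simp add: cinner_commute[of x y])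
  finally show ?thesis .
qed

lemma cinner_zero_left[simp]:
  fixes x y z :: "'a::complex_inner"
  shows "cinner 0 y = 0"
  using cinner_add_left[of 0 0 y] by simp

lemma cinner_zero_right[simp]:
  fixes x y z :: "'a::complex_inner"
  shows "cinner y 0 = 0"
  using cinner_add_right[of y 0 0] by simp

lemma cinner_minus_left:
  fixes x y z :: "'a::complex_inner"
  shows "cinner (- x) y = - cinner x y"
proof -
  have "cinner x y + cinner (- x) y = 0" using cinner_add_left[of x "-x" y] by simp
  then show ?thesis by (rule add_eq_0_iff[THEN iffD1])
qed

lemma cinner_minus_right:
  fixes x y z :: "'a::complex_inner"
  shows "cinner y (- x) = - cinner y x"
proof -
  have "cinner y x + cinner y (- x) = 0" using cinner_add_right[of y x "-x"] by simp
  then show ?thesis by (rule add_eq_0_iff[THEN iffD1])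
qed

lemma cinner_diff_left:
  fixes x y z :: "'a::complex_inner"
  shows "cinner (x - z) y = cinner x y - cinner z y"
  using cinner_add_left[of x "-z" y] by (simp add: cinner_minus_left)

lemma cinner_diff_right:
  fixes x y z :: "'a::complex_inner"
  shows "cinner y (x - z) = cinner y x - cinner y z"
  using cinner_add_right[of y x "-z"] by (simp add: cinner_minus_right)

lemma cinner_scaleR_left:
  fixes x y z :: "'a::complex_inner"
  shows "cinner (r *\<^sub>R x) y = complex_of_real r * cinner x y"
  by (simp add: scaleR_scaleC cinner_scaleC_left)

lemma cinner_scaleR_right:
  fixes x y z :: "'a::complex_inner"
  shows "cinner y (r *\<^sub>R x) = complex_of_real r * cinner y x"
  by (simp add: scaleR_scaleC cinner_scaleC_right)

lemma Im_cinner_self: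
  fixes x y z :: "'a::complex_inner"
  shows "Im (cinner x x) = 0"
proof -
  have "Im (cinner x x) = Im (cnj (cinner x x))" using cinner_commute[of x x] by simp
  then show ?thesis by simp
qed

lemma cinner_self_eq:
  fixes x y z :: "'a::complex_inner"
  shows "cinner x x = complex_of_real ((norm x)\<^sup>2)"
  using Im_cinner_self[of x] cinner_nonneg[of x]
  by (simp add: norm_eq_sqrt_cinner complex_eq_iff)

lemma norm_sq_Re:
  fixes x y z :: "'a::complex_inner"
  shows "(norm x)\<^sup>2 = Re (cinner x x)"
  by (simp add: cinner_self_eq)

lemma norm_add_sq:
  fixes x y z :: "'a::complex_inner"
  shows "(norm (x + y))\<^sup>2 = (norm x)\<^sup>2 + 2 * Re (cinner x y) + (norm y)\<^sup>2"
proof -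
  have "Re (cinner y x) = Re (cnj (cinner x y))" using cinner_commute[of y x] by simp
  then have "Re (cinner y x) = Re (cinner x y)" by simp
  then show ?thesis
    by (simp add: norm_sq_Re cinner_add_left cinner_add_right)
qed

lemma norm_diff_sq:
  fixes x y z :: "'a::complex_inner"
  shows "(norm (x - y))\<^sup>2 = (norm x)\<^sup>2 - 2 * Re (cinner x y) + (norm y)\<^sup>2"
  using norm_add_sq[of x "-y"] by (simp add: cinner_minus_right)

lemma Re_cinner_le:
  fixes x y z :: "'a::complex_inner"
  shows "Re (cinner x y) \<le> norm x * norm y"
proof (cases "norm x * norm y = 0")
  case True
  then have "x = 0 \<or> y = 0" by simp
  then show ?thesis by auto
next
  case False
  then have pos: "norm x * norm y > 0" by (simp add: less_le)
  have "0 \<le> (norm ((norm y) *\<^sub>R x - (norm x) *\<^sub>R y))\<^sup>2" by simp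
  also have "\<dots> = 2 * (norm x * norm y) * (norm x * norm y - Re (cinner x y))"
    unfolding norm_diff_sq by (simp add: cinner_scaleR_left cinner_scaleR_right power2_eq_square algebra_simps)
  finally show ?thesis using pos by (simp add: zero_le_mult_iff)
qed

lemma cinner_scaleC_left': "cinner (a *\<^sub>C x) y = cnj a * cinner x y"
  by (rule cinner_scaleC_left)

lemma norm_scaleC:
  fixes x y z :: "'a::complex_inner"
  shows "norm (a *\<^sub>C x) = cmod a * norm x"
proof -
  have ca: "cnj a * a = complex_of_real ((cmod a)\<^sup>2)"
    by (metis complex_norm_square mult.commute)
  have "(norm (a *\<^sub>C x))\<^sup>2 = Re (cnj a * (a * cinner x x))"
    unfolding norm_sq_Re by (simp only: cinner_scaleC_left cinner_scaleC_right mult.left_commute)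
  also have "\<dots> = Re ((cnj a * a) * cinner x x)" by (simp only: mult.assoc)
  also have "\<dots> = (cmod a * norm x)\<^sup>2"
    unfolding ca cinner_self_eq by (simp only: Re_complex_of_real flip: of_real_mult) (simp add: power_mult_distrib)
  finally have "(norm (a *\<^sub>C x))\<^sup>2 = (cmod a * norm x)\<^sup>2" .
  then show ?thesis by (simp add: power2_eq_iff_nonneg)
qed

lemma cinner_cauchy_schwarz:
  fixes x y z :: "'a::complex_inner"
  shows "cmod (cinner x y) \<le> norm x * norm y"
proof (cases "cinner x y = 0")
  case True then show ?thesis by simp
next
  case False
  define c where "c = cinner x y / cmod (cinner x y)"
  have cm: "cmod c = 1" using False by (simp add: c_def norm_divide)
  have zz: "cnj (cinner x y) * cinner x y = complex_of_real ((cmod (cinner x y))\<^sup>2)"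
    by (metis complex_norm_square mult.commute)
  have "cnj c * cinner x y = cnj (cinner x y) * cinner x y / complex_of_real (cmod (cinner x y))"
    by (simp add: c_def)
  also have "\<dots> = complex_of_real (cmod (cinner x y))"
    unfolding zz using False by (simp add: power2_eq_square)
  finally have "cmod (cinner x y) = Re (cnj c * cinner x y)" by simp
  also have "\<dots> = Re (cinner (c *\<^sub>C x) y)" by (simp add: cinner_scaleC_left)
  also have "\<dots> \<le> norm (c *\<^sub>C x) * norm y" by (rule Re_cinner_le)
  also have "\<dots> = norm x * norm y" by (simp add: norm_scaleC cm)
  finally show ?thesis .
qed

lemma cinner_ext:
  fixes x y z :: "'a::complex_inner"
  shows "(\<And>z. cinner x z = cinner y z) \<Longrightarrow> x = y"
proof -
  assume "\<And>z. cinner x z = cinner y z"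
  then have "cinner (x - y) (x - y) = 0" by (simp add: cinner_diff_left)
  then show "x = y" by (simp add: cinner_eq_zero_iff)
qed

lemma cinner_ext_right:
  fixes x y z :: "'a::complex_inner"
  shows "(\<And>z. cinner z x = cinner z y) \<Longrightarrow> x = y"
proof -
  assume "\<And>z. cinner z x = cinner z y"
  then have "cinner (x - y) (x - y) = 0" by (simp add: cinner_diff_right)
  then show "x = y" by (simp add: cinner_eq_zero_iff)
qed

lemma bounded_linear_cinner_right:
  fixes x y z :: "'a::complex_inner"
  shows "bounded_linear (cinner x)"
proof (rule bounded_linear_intro[where K="norm x"])
  show "cinner x (y + z) = cinner x y + cinner x z" for y z by (rule cinner_add_right)
  show "cinner x (r *\<^sub>R y) = r *\<^sub>R cinner x y" for r y
    by (simp add: cinner_scaleR_right scaleR_conv_of_real)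
  show "norm (cinner x y) \<le> norm y * norm x" for y
    using cinner_cauchy_schwarz[of x y] by (simp add: mult.commute)
qed

lemma bounded_linear_cinner_left:
  fixes x y z :: "'a::complex_inner"
  shows "bounded_linear (\<lambda>x. cinner x y)"
proof (rule bounded_linear_intro[where K="norm y"])
  show "cinner (x + z) y = cinner x y + cinner z y" for x z by (rule cinner_add_left)
  show "cinner (r *\<^sub>R x) y = r *\<^sub>R cinner x y" for r x
    by (simp add: cinner_scaleR_left scaleR_conv_of_real)
  show "norm (cinner x y) \<le> norm x * norm y" for x
    using cinner_cauchy_schwarz[of x y] by simp
qed

lemma scaleC_zero_right[simp]:
  fixes x y z :: "'a::complex_inner"
  shows "a *\<^sub>C 0 = 0"
  using scaleC_add_right[of a 0 0] by simp

lemma scaleC_zero_left[simp]: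
  fixes x y z :: "'a::complex_inner"
  shows "0 *\<^sub>C x = 0"
  using scaleC_add_left[of 0 0 x] by simp

lemma scaleC_minus_right:
  fixes x y z :: "'a::complex_inner"
  shows "a *\<^sub>C (- x) = - (a *\<^sub>C x)"
proof -
  have "a *\<^sub>C x + a *\<^sub>C (- x) = 0" using scaleC_add_right[of a x "-x"] by simp
  then show ?thesis by (rule add_eq_0_iff[THEN iffD1])
qed

lemma scaleC_diff_right:
  fixes x y z :: "'a::complex_inner"
  shows "a *\<^sub>C (x - y) = a *\<^sub>C x - a *\<^sub>C y"
  using scaleC_add_right[of a x "-y"] by (simp add: scaleC_minus_right)



section \<open>Bounded complex-linear maps\<close>

lemma bcl_lin: "bounded_clinear T \<Longrightarrow> bounded_linear T"
  by (simp add: bounded_clinear_def)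

lemma bcl_scaleC: "bounded_clinear T \<Longrightarrow> T (c *\<^sub>C x) = c *\<^sub>C T x"
  by (simp add: bounded_clinear_def)

lemma bcl_add: "bounded_clinear T \<Longrightarrow> T (x + y) = T x + T y"
  by (simp add: bounded_clinear_def linear_simps)

lemma bcl_diff: "bounded_clinear T \<Longrightarrow> T (x - y) = T x - T y"
  by (simp add: bounded_clinear_def linear_simps)

lemma bcl_minus: "bounded_clinear T \<Longrightarrow> T (- x) = - T x"
  by (simp add: bounded_clinear_def linear_simps)

lemma bcl_zero: "bounded_clinear T \<Longrightarrow> T 0 = 0"
  by (simp add: bounded_clinear_def linear_simps)

lemma bcl_scaleR: "bounded_clinear T \<Longrightarrow> T (r *\<^sub>R x) = r *\<^sub>R T x"
  by (simp add: bounded_clinear_def linear_simps)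

lemma bcl_cont: "bounded_clinear T \<Longrightarrow> continuous_on S T"
  using bounded_linear.continuous_on[OF bcl_lin continuous_on_id] by blast

lemma bounded_linear_scaleC_const:
  "bounded_linear (\<lambda>x::'a::complex_inner. c *\<^sub>C x)"
proof (rule bounded_linear_intro[where K="cmod c"])
  show "c *\<^sub>C (x + y) = c *\<^sub>C x + c *\<^sub>C y" for x y :: 'a by (rule scaleC_add_right)
  show "c *\<^sub>C (r *\<^sub>R x) = r *\<^sub>R (c *\<^sub>C x)" for r and x :: 'a
    by (simp only: scaleR_scaleC scaleC_scaleC mult.commute)
  show "norm (c *\<^sub>C x) \<le> norm x * cmod c" for x :: 'a
    by (simp add: norm_scaleC mult.commute)
qed

lemma bcl_comp: "bounded_clinear A \<Longrightarrow> bounded_clinear B \<Longrightarrow> bounded_clinear (A \<circ> B)"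
proof -
  assume a: "bounded_clinear A" and b: "bounded_clinear B"
  have "bounded_linear (\<lambda>x. A (B x))" by (rule bounded_linear_compose[OF bcl_lin[OF a] bcl_lin[OF b]])
  moreover have "A (B (c *\<^sub>C x)) = c *\<^sub>C A (B x)" for c x by (simp add: bcl_scaleC[OF a] bcl_scaleC[OF b])
  ultimately show ?thesis unfolding bounded_clinear_def o_def by blast
qed

lemma bcl_comp': "bounded_clinear A \<Longrightarrow> bounded_clinear B \<Longrightarrow> bounded_clinear (\<lambda>x. A (B x))"
  using bcl_comp[of A B] by (simp add: o_def)

lemma bcl_id: "bounded_clinear (\<lambda>x. x)"
  unfolding bounded_clinear_def using bounded_linear_ident by blast

lemma bcl_id': "bounded_clinear id"
  using bcl_id by (simp add: id_def)

lemma bcl_add_fun: "bounded_clinear A \<Longrightarrow> bounded_clinear B \<Longrightarrow> bounded_clinear (\<lambda>x. A x + B x)"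
proof -
  assume a: "bounded_clinear A" and b: "bounded_clinear B"
  have "bounded_linear (\<lambda>x. A x + B x)" by (rule bounded_linear_add[OF bcl_lin[OF a] bcl_lin[OF b]])
  moreover have "A (c *\<^sub>C x) + B (c *\<^sub>C x) = c *\<^sub>C (A x + B x)" for c x
    by (simp add: bcl_scaleC[OF a] bcl_scaleC[OF b] scaleC_add_right)
  ultimately show ?thesis unfolding bounded_clinear_def by blast
qed

lemma bcl_diff_fun: "bounded_clinear A \<Longrightarrow> bounded_clinear B \<Longrightarrow> bounded_clinear (\<lambda>x. A x - B x)"
proof -
  assume a: "bounded_clinear A" and b: "bounded_clinear B"
  have "bounded_linear (\<lambda>x. A x - B x)" by (rule bounded_linear_sub[OF bcl_lin[OF a] bcl_lin[OF b]])
  moreover have "A (c *\<^sub>C x) - B (c *\<^sub>C x) = c *\<^sub>C (A x - B x)" for c x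
    by (simp add: bcl_scaleC[OF a] bcl_scaleC[OF b] scaleC_diff_right)
  ultimately show ?thesis unfolding bounded_clinear_def by blast
qed

lemma bcl_scaleC_fun: "bounded_clinear A \<Longrightarrow> bounded_clinear (\<lambda>x. c *\<^sub>C A x)"
  unfolding bounded_clinear_def
  using bounded_linear_compose[OF bounded_linear_scaleC_const[of c]]
  by (auto simp: scaleC_scaleC mult.commute)

lemma bcl_scaleR_fun: "bounded_clinear A \<Longrightarrow> bounded_clinear (\<lambda>x. r *\<^sub>R A x)"
  using bcl_scaleC_fun[of A "complex_of_real r"] by (simp add: scaleR_scaleC)

section \<open>Closed subspaces and projections\<close>

definition hsub :: "'a::complex_inner set \<Rightarrow> bool" where
  "hsub V \<longleftrightarrow> 0 \<in> V \<and> (\<forall>x\<in>V. \<forall>y\<in>V. x + y \<in> V) \<and> (\<forall>c. \<forall>x\<in>V. c *\<^sub>C x \<in> V)"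

definition horth :: "'a::complex_inner set \<Rightarrow> 'a set" where
  "horth V = {y. \<forall>v\<in>V. cinner v y = 0}"

definition hproj :: "'a::complex_inner set \<Rightarrow> 'a \<Rightarrow> 'a" where
  "hproj V x = (SOME p. p \<in> V \<and> (\<forall>v\<in>V. cinner v (x - p) = 0))"

lemma hsub_0: "hsub V \<Longrightarrow> 0 \<in> V" by (simp add: hsub_def)
lemma hsub_add: "hsub V \<Longrightarrow> x \<in> V \<Longrightarrow> y \<in> V \<Longrightarrow> x + y \<in> V" by (simp add: hsub_def)
lemma hsub_scaleC: "hsub V \<Longrightarrow> x \<in> V \<Longrightarrow> c *\<^sub>C x \<in> V" by (simp add: hsub_def)
lemma hsub_scaleR: "hsub V \<Longrightarrow> x \<in> V \<Longrightarrow> r *\<^sub>R x \<in> V" by (simp add: hsub_def scaleR_scaleC)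
lemma hsub_minus: "hsub V \<Longrightarrow> x \<in> V \<Longrightarrow> - x \<in> V"
  using hsub_scaleR[of V x "-1"] by simp
lemma hsub_diff: "hsub V \<Longrightarrow> x \<in> V \<Longrightarrow> y \<in> V \<Longrightarrow> x - y \<in> V"
  using hsub_add[of V x "-y"] hsub_minus[of V y] by simp

lemma horth_hsub: "hsub (horth V)"
  unfolding hsub_def horth_def by (simp add: cinner_add_right cinner_scaleC_right)

lemma horth_closed: "closed (horth V)"
proof -
  have "horth V = (\<Inter>v\<in>V. {y. cinner v y = 0})" unfolding horth_def by auto
  moreover have "closed {y. cinner v y = 0}" for v
    by (rule closed_Collect_eq)
      (auto intro: bounded_linear.continuous_on[OF bounded_linear_cinner_right continuous_on_id])
  ultimately show ?thesis by auto
qed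

lemma ker_hsub: "bounded_clinear A \<Longrightarrow> hsub {x. A x = 0}"
  unfolding hsub_def by (simp add: bcl_add bcl_zero bcl_scaleC)

lemma ker_closed: "bounded_clinear A \<Longrightarrow> closed {x. A x = (0::'a::chilbert_space)}"
  by (rule closed_Collect_eq) (auto intro: bcl_cont)

lemma horth_mono: "A \<subseteq> B \<Longrightarrow> horth B \<subseteq> horth A"
  unfolding horth_def by auto

lemma horth_horth_sup: "A \<subseteq> horth (horth A)"
  unfolding horth_def by auto (metis cinner_commute complex_cnj_zero)

lemma parallelogram:
  fixes a b :: "'a::complex_inner"
  shows "(norm (a + b))\<^sup>2 + (norm (a - b))\<^sup>2 = 2 * (norm a)\<^sup>2 + 2 * (norm b)\<^sup>2"
  by (simp add: norm_add_sq norm_diff_sq)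

lemma quad_zero:
  fixes r q :: real
  assumes "q \<ge> 0" and "\<And>t. 0 \<le> - 2 * t * r + t\<^sup>2 * q"
  shows "r = 0"
proof -
  have q1: "q + 1 > 0" using assms(1) by simp
  have eq0: "- 2 * (r / u) * r + (r / u)\<^sup>2 * q = (r\<^sup>2 / u\<^sup>2) * (- 2 * u + q)" if "u \<noteq> 0" for u
    using that by (simp add: field_simps power2_eq_square)
  have eq: "- 2 * (r / (q + 1)) * r + (r / (q + 1))\<^sup>2 * q = (r\<^sup>2 / (q + 1)\<^sup>2) * (- 2 * (q + 1) + q)"
    using q1 by (intro eq0) simp
  have "0 \<le> - 2 * (r / (q + 1)) * r + (r / (q + 1))\<^sup>2 * q" by (rule assms(2))
  then have "0 \<le> (r\<^sup>2 / (q + 1)\<^sup>2) * (- 2 * (q + 1) + q)" unfolding eq .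
  moreover have "- 2 * (q + 1) + q < 0" using assms(1) by simp
  ultimately have "r\<^sup>2 / (q + 1)\<^sup>2 \<le> 0"
    using zero_le_mult_iff[of "r\<^sup>2 / (q + 1)\<^sup>2" "- 2 * (q + 1) + q"] by linarith
  then have "r\<^sup>2 = 0" using q1 by (simp add: divide_le_0_iff)
  then show ?thesis by simp
qed

lemma proj_exists:
  fixes V :: "'a::chilbert_space set"
  assumes cl: "closed V" and sub: "hsub V"
  shows "\<exists>p\<in>V. \<forall>v\<in>V. cinner v (x - p) = 0"
proof -
  define D where "D = (\<lambda>v. (norm (x - v))\<^sup>2) ` V"
  define d where "d = Inf D"
  have Dne: "D \<noteq> {}" using hsub_0[OF sub] by (auto simp: D_def)
  have Dbdd: "bdd_below D" unfolding D_def by (rule bdd_belowI[where m=0]) auto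
  have lower: "d \<le> (norm (x - w))\<^sup>2" if "w \<in> V" for w
    unfolding d_def by (rule cInf_lower[OF _ Dbdd]) (use that in \<open>auto simp: D_def\<close>)
  have "\<exists>w\<in>V. (norm (x - w))\<^sup>2 < d + inverse (real (Suc n))" for n
  proof -
    have "Inf D < d + inverse (real (Suc n))" unfolding d_def by simp
    from cInf_lessD[OF Dne this] show ?thesis by (auto simp: D_def)
  qed
  then obtain v where v: "\<And>n. v n \<in> V" and vd: "\<And>n. (norm (x - v n))\<^sup>2 < d + inverse (real (Suc n))"
    by metis
  have mid: "(norm (v m - v n))\<^sup>2 \<le> 2 * inverse (real (Suc n)) + 2 * inverse (real (Suc m))" for m n
  proof -
    have midV: "(1/2::real) *\<^sub>R (v n + v m) \<in> V"
      by (intro hsub_scaleR[OF sub] hsub_add[OF sub] v)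
    have e: "(x - v n) + (x - v m) = 2 *\<^sub>R (x - (1/2::real) *\<^sub>R (v n + v m))"
      by (simp add: algebra_simps scaleR_2)
    have "(norm ((x - v n) + (x - v m)))\<^sup>2 = 4 * (norm (x - (1/2::real) *\<^sub>R (v n + v m)))\<^sup>2"
      unfolding e by (simp add: power2_eq_square)
    also have "\<dots> \<ge> 4 * d" using lower[OF midV] by simp
    finally have a: "(norm ((x - v n) + (x - v m)))\<^sup>2 \<ge> 4 * d" .
    have b: "(x - v n) - (x - v m) = v m - v n" by simp
    from parallelogram[of "x - v n" "x - v m"] a vd[of n] vd[of m]
    show ?thesis unfolding b by linarith
  qed
  have "Cauchy v"
  proof (rule CauchyI)
    fix e :: real assume e: "0 < e"
    obtain M :: nat where M: "4 / e\<^sup>2 < real M" using reals_Archimedean2 by blast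
    have "\<forall>m\<ge>M. \<forall>n\<ge>M. norm (v m - v n) < e"
    proof (intro allI impI)
      fix m n assume mn: "M \<le> m" "M \<le> n"
      have "inverse (real (Suc n)) \<le> inverse (real (Suc M))"
        using mn by (simp add: field_simps)
      moreover have "inverse (real (Suc m)) \<le> inverse (real (Suc M))"
        using mn by (simp add: field_simps)
      moreover have "4 * inverse (real (Suc M)) < e\<^sup>2"
      proof -
        have "4 / e\<^sup>2 < real (Suc M)" using M by simp
        then have "4 < e\<^sup>2 * real (Suc M)" using e by (simp add: field_simps)
        then show ?thesis by (simp add: field_simps)
      qed
      ultimately have "(norm (v m - v n))\<^sup>2 < e\<^sup>2" using mid[of m n] by linarith
      then show "norm (v m - v n) < e" using e by (simp add: power_less_imp_less_base)
    qed
    then show "\<exists>M. \<forall>m\<ge>M. \<forall>n\<ge>M. norm (v m - v n) < e" by blast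
  qed
  then obtain p where vp: "v \<longlonglongrightarrow> p" using Cauchy_convergent convergent_def by blast
  have pV: "p \<in> V" using closed_sequentially[OF cl v vp] .
  have "(\<lambda>n. (norm (x - v n))\<^sup>2) \<longlonglongrightarrow> (norm (x - p))\<^sup>2"
    by (intro tendsto_intros vp)
  moreover have "(\<lambda>n. d + inverse (real (Suc n))) \<longlonglongrightarrow> d + 0"
    by (intro tendsto_intros LIMSEQ_inverse_real_of_nat)
  ultimately have pd: "(norm (x - p))\<^sup>2 \<le> d"
    using vd by (intro LIMSEQ_le[of _ _ "\<lambda>n. d + inverse (real (Suc n))"]) (auto intro: less_imp_le)
  have min: "(norm (x - p))\<^sup>2 \<le> (norm (x - w))\<^sup>2" if "w \<in> V" for w
    using pd lower[OF that] by linarith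
  define e where "e = x - p"
  have Re0: "Re (cinner e w) = 0" if w: "w \<in> V" for w
  proof (rule quad_zero[where q="(norm w)\<^sup>2"])
    show "0 \<le> (norm w)\<^sup>2" by simp
    fix t :: real
    have "p + t *\<^sub>R w \<in> V" by (intro hsub_add[OF sub] hsub_scaleR[OF sub] pV w)
    from min[OF this] have "(norm e)\<^sup>2 \<le> (norm (e - t *\<^sub>R w))\<^sup>2"
      by (simp add: e_def algebra_simps)
    moreover have r1: "Re (cinner e (t *\<^sub>R w)) = t * Re (cinner e w)" by (simp add: cinner_scaleR_right)
    moreover have r2: "(norm (t *\<^sub>R w))\<^sup>2 = t\<^sup>2 * (norm w)\<^sup>2" by (simp add: power_mult_distrib)
    ultimately show "0 \<le> - 2 * t * Re (cinner e w) + t\<^sup>2 * (norm w)\<^sup>2"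
      using norm_diff_sq[of e "t *\<^sub>R w"] by linarith
  qed
  have "cinner w e = 0" if w: "w \<in> V" for w
  proof -
    have a: "Re (cinner e w) = 0" using Re0[OF w] .
    have "Re (cinner e (\<i> *\<^sub>C w)) = 0" using Re0[OF hsub_scaleC[OF sub w]] .
    then have b: "Im (cinner e w) = 0" by (simp add: cinner_scaleC_right)
    from a b have "cinner e w = 0" by (simp add: complex_eq_iff)
    then show ?thesis using cinner_commute[of w e] by simp
  qed
  then show ?thesis using pV unfolding e_def by blast
qed

lemma hproj:
  fixes V :: "'a::chilbert_space set"
  assumes "closed V" "hsub V"
  shows "hproj V x \<in> V" "\<And>v. v \<in> V \<Longrightarrow> cinner v (x - hproj V x) = 0"
proof -
  have "\<exists>p. p \<in> V \<and> (\<forall>v\<in>V. cinner v (x - p) = 0)" using proj_exists[OF assms] by blast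
  from someI_ex[OF this] show "hproj V x \<in> V" "\<And>v. v \<in> V \<Longrightarrow> cinner v (x - hproj V x) = 0"
    unfolding hproj_def by auto
qed

lemma hproj_unique:
  fixes V :: "'a::chilbert_space set"
  assumes cl: "closed V" and sub: "hsub V" and p: "p \<in> V" and o: "\<And>v. v \<in> V \<Longrightarrow> cinner v (x - p) = 0"
  shows "hproj V x = p"
proof -
  let ?q = "hproj V x"
  have d: "p - ?q \<in> V" by (intro hsub_diff[OF sub] p hproj(1)[OF cl sub])
  have "cinner (p - ?q) (p - ?q) = cinner (p - ?q) (x - ?q) - cinner (p - ?q) (x - p)"
    by (simp add: cinner_diff_right[symmetric])
  also have "\<dots> = 0" using hproj(2)[OF cl sub d] o[OF d] by simp
  finally show ?thesis by (simp add: cinner_eq_zero_iff)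
qed

lemma hproj_id: "closed V \<Longrightarrow> hsub V \<Longrightarrow> x \<in> V \<Longrightarrow> hproj V x = (x::'a::chilbert_space)"
  by (rule hproj_unique) auto

lemma hproj_zero: "closed V \<Longrightarrow> hsub V \<Longrightarrow> x \<in> horth V \<Longrightarrow> hproj V x = (0::'a::chilbert_space)"
  by (rule hproj_unique) (auto simp: horth_def hsub_0)

lemma hproj_orth: "closed V \<Longrightarrow> hsub V \<Longrightarrow> x - hproj V x \<in> horth V"
  for x :: "'a::chilbert_space"
  using hproj(2) by (auto simp: horth_def)

lemma hproj_selfadj:
  fixes V :: "'a::chilbert_space set"
  assumes cl: "closed V" and sub: "hsub V"
  shows "cinner (hproj V x) y = cinner x (hproj V y)"
proof -
  have 1: "cinner (hproj V x) (y - hproj V y) = 0" by (rule hproj(2)[OF cl sub hproj(1)[OF cl sub]])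
  have "cinner (hproj V y) (x - hproj V x) = 0" by (rule hproj(2)[OF cl sub hproj(1)[OF cl sub]])
  then have 2: "cinner (x - hproj V x) (hproj V y) = 0" using cinner_commute[of "x - hproj V x"] by simp
  from 1 2 show ?thesis by (simp add: cinner_diff_right cinner_diff_left)
qed

lemma hproj_bcl:
  fixes V :: "'a::chilbert_space set"
  assumes cl: "closed V" and sub: "hsub V"
  shows "bounded_clinear (hproj V)"
proof -
  have add: "hproj V (x + y) = hproj V x + hproj V y" for x y
  proof (rule hproj_unique[OF cl sub])
    show "hproj V x + hproj V y \<in> V" by (intro hsub_add[OF sub] hproj(1)[OF cl sub])
    fix v assume v: "v \<in> V"
    have e: "(x + y) - (hproj V x + hproj V y) = (x - hproj V x) + (y - hproj V y)" by simp
    show "cinner v (x + y - (hproj V x + hproj V y)) = 0"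
      unfolding e cinner_add_right using hproj(2)[OF cl sub v, of x] hproj(2)[OF cl sub v, of y] by simp
  qed
  have sc: "hproj V (c *\<^sub>C x) = c *\<^sub>C hproj V x" for c x
  proof (rule hproj_unique[OF cl sub])
    show "c *\<^sub>C hproj V x \<in> V" by (intro hsub_scaleC[OF sub] hproj(1)[OF cl sub])
    fix v assume v: "v \<in> V"
    have "cinner v (c *\<^sub>C x - c *\<^sub>C hproj V x) = c * cinner v (x - hproj V x)"
      by (simp add: scaleC_diff_right[symmetric] cinner_scaleC_right)
    then show "cinner v (c *\<^sub>C x - c *\<^sub>C hproj V x) = 0" using hproj(2)[OF cl sub v] by simp
  qed
  have nb: "norm (hproj V x) \<le> norm x * 1" for x
  proof -
    have "Re (cinner (hproj V x) (x - hproj V x)) = 0" using hproj(2)[OF cl sub hproj(1)[OF cl sub]] by simp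
    then have "(norm x)\<^sup>2 = (norm (hproj V x))\<^sup>2 + (norm (x - hproj V x))\<^sup>2"
      using norm_add_sq[of "hproj V x" "x - hproj V x"] by simp
    moreover have "0 \<le> (norm (x - hproj V x))\<^sup>2" by (rule zero_le_power2)
    ultimately have "(norm (hproj V x))\<^sup>2 \<le> (norm x)\<^sup>2" by linarith
    from power2_le_imp_le[OF this norm_ge_zero] show ?thesis by simp
  qed
  have "bounded_linear (hproj V)"
  proof (rule bounded_linear_intro[where K=1])
    show "hproj V (x + y) = hproj V x + hproj V y" for x y by (rule add)
    show "hproj V (r *\<^sub>R x) = r *\<^sub>R hproj V x" for r x
      unfolding scaleR_scaleC by (rule sc)
    show "norm (hproj V x) \<le> norm x * 1" for x by (rule nb)
  qed
  then show ?thesis unfolding bounded_clinear_def using sc by blast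
qed

lemma horth_horth:
  fixes V :: "'a::chilbert_space set"
  assumes cl: "closed V" and sub: "hsub V"
  shows "horth (horth V) = V"
proof
  show "V \<subseteq> horth (horth V)" by (rule horth_horth_sup)
  show "horth (horth V) \<subseteq> V"
  proof
    fix y assume y: "y \<in> horth (horth V)"
    let ?p = "hproj V y"
    have o: "y - ?p \<in> horth V" by (rule hproj_orth[OF cl sub])
    have "?p \<in> horth (horth V)" using horth_horth_sup hproj(1)[OF cl sub] by blast
    then have "y - ?p \<in> horth (horth V)" using y by (intro hsub_diff[OF horth_hsub])
    with o have "cinner (y - ?p) (y - ?p) = 0" by (auto simp: horth_def)
    then have "y = ?p" by (simp add: cinner_eq_zero_iff)
    then show "y \<in> V" using hproj(1)[OF cl sub, of y] by simp
  qed
qed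

section \<open>Riesz representation and adjoints\<close>

lemma riesz:
  fixes f :: "'a::chilbert_space \<Rightarrow> complex"
  assumes bl: "bounded_linear f" and fc: "\<And>c x. f (c *\<^sub>C x) = c * f x"
  shows "\<exists>y. \<forall>x. f x = cinner y x"
proof (cases "\<forall>x. f x = 0")
  case True then show ?thesis by (intro exI[of _ 0]) simp
next
  case False
  then obtain x0 where x0: "f x0 \<noteq> 0" by blast
  define N where "N = {x. f x = 0}"
  have clN: "closed N" unfolding N_def
    by (rule closed_Collect_eq) (auto intro: bounded_linear.continuous_on[OF bl continuous_on_id])
  have subN: "hsub N" unfolding N_def hsub_def
    using bl by (simp add: fc linear_simps)
  define z where "z = x0 - hproj N x0"
  have zo: "\<And>v. v \<in> N \<Longrightarrow> cinner v z = 0" unfolding z_def by (rule hproj(2)[OF clN subN])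
  have "f (hproj N x0) = 0" using hproj(1)[OF clN subN] by (simp add: N_def)
  then have fz: "f z = f x0" unfolding z_def using bl by (simp add: linear_simps)
  then have z0: "z \<noteq> 0" using x0 bl by (auto simp: linear_simps)
  then have zz: "cinner z z \<noteq> 0" by (simp add: cinner_eq_zero_iff)
  have "f x = cinner ((cnj (f z / cinner z z)) *\<^sub>C z) x" for x
  proof -
    have "f x *\<^sub>C z - f z *\<^sub>C x \<in> N" unfolding N_def
      using bl by (simp add: linear_simps fc)
    from zo[OF this] have "cinner (f x *\<^sub>C z - f z *\<^sub>C x) z = 0" .
    then have "cnj (cinner (f x *\<^sub>C z - f z *\<^sub>C x) z) = 0" by simp
    then have "cinner z (f x *\<^sub>C z - f z *\<^sub>C x) = 0" by (metis cinner_commute)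
    then have "f x * cinner z z = f z * cinner z x"
      by (simp add: cinner_diff_right cinner_scaleC_right)
    then show ?thesis using zz by (simp add: cinner_scaleC_left field_simps)
  qed
  then show ?thesis by blast
qed

lemma adjoint_exists:
  fixes T :: "'a::chilbert_space \<Rightarrow> 'a"
  assumes T: "bounded_clinear T"
  shows "\<exists>S. bounded_clinear S \<and> (\<forall>x y. cinner (T x) y = cinner x (S y))"
proof -
  have "\<exists>z. \<forall>x. cinner y (T x) = cinner z x" for y
  proof (rule riesz)
    show "bounded_linear (\<lambda>x. cinner y (T x))"
      by (rule bounded_linear_compose[OF bounded_linear_cinner_right bcl_lin[OF T]])
    show "cinner y (T (c *\<^sub>C x)) = c * cinner y (T x)" for c x
      by (simp add: bcl_scaleC[OF T] cinner_scaleC_right)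
  qed
  then have "\<forall>y. \<exists>z. \<forall>x. cinner y (T x) = cinner z x" by blast
  then obtain S where S0: "\<forall>y. \<forall>x. cinner y (T x) = cinner (S y) x" by (rule choice[THEN exE]) blast
  then have S: "\<And>y x. cinner y (T x) = cinner (S y) x" by blast
  have Sx: "cinner (T x) y = cinner x (S y)" for x y
  proof -
    have "cinner (T x) y = cnj (cinner y (T x))" by (rule cinner_commute)
    also have "\<dots> = cnj (cinner (S y) x)" by (simp only: S)
    also have "\<dots> = cinner x (S y)" by (rule cinner_commute[symmetric])
    finally show ?thesis .
  qed
  have Sadd: "S (y1 + y2) = S y1 + S y2" for y1 y2
    by (rule cinner_ext) (simp add: S[symmetric] cinner_add_left)
  have SC: "S (c *\<^sub>C y) = c *\<^sub>C S y" for c y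
    by (rule cinner_ext) (simp add: S[symmetric] cinner_scaleC_left)
  obtain K where K: "K > 0" "\<And>x. norm (T x) \<le> norm x * K"
    using bounded_linear.pos_bounded[OF bcl_lin[OF T]] by blast
  have Sb: "norm (S y) \<le> norm y * K" for y
  proof (cases "S y = 0")
    case True then show ?thesis using K by simp
  next
    case False
    have "(norm (S y))\<^sup>2 = Re (cinner y (T (S y)))" by (simp add: norm_sq_Re S)
    also have "\<dots> \<le> norm y * norm (T (S y))" by (rule Re_cinner_le)
    also have "\<dots> \<le> norm y * (norm (S y) * K)" by (simp add: K(2) mult_left_mono)
    finally have "norm (S y) * norm (S y) \<le> norm (S y) * (norm y * K)"
      by (simp only: power2_eq_square mult.left_commute mult.commute)
    moreover have "norm (S y) > 0" using False by simp
    ultimately show ?thesis by (rule mult_left_le_imp_le)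
  qed
  have "bounded_linear S"
  proof (rule bounded_linear_intro[where K=K])
    show "S (x + y) = S x + S y" for x y by (rule Sadd)
    show "S (r *\<^sub>R x) = r *\<^sub>R S x" for r x unfolding scaleR_scaleC by (rule SC)
    show "norm (S x) \<le> norm x * K" for x by (rule Sb)
  qed
  then have "bounded_clinear S" unfolding bounded_clinear_def using SC by blast
  then show ?thesis using Sx by blast
qed

lemma adj_prop:
  fixes T :: "'a::chilbert_space \<Rightarrow> 'a"
  assumes "bounded_clinear T"
  shows "bounded_clinear (adj T)" "\<And>x y. cinner (T x) y = cinner x (adj T y)"
proof -
  have "bounded_clinear (adj T) \<and> (\<forall>x y. cinner (T x) y = cinner x (adj T y))"
    unfolding adj_def by (rule someI_ex[OF adjoint_exists[OF assms]])
  then show "bounded_clinear (adj T)" "\<And>x y. cinner (T x) y = cinner x (adj T y)" by simp_all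
qed

lemma adj_left:
  fixes T :: "'a::chilbert_space \<Rightarrow> 'a"
  assumes "bounded_clinear T"
  shows "cinner (adj T x) y = cinner x (T y)"
proof -
  have "cinner (adj T x) y = cnj (cinner y (adj T x))" by (rule cinner_commute)
  also have "\<dots> = cnj (cinner (T y) x)" by (simp only: adj_prop(2)[OF assms])
  also have "\<dots> = cinner x (T y)" by (rule cinner_commute[symmetric])
  finally show ?thesis .
qed

lemma adj_eq:
  fixes T :: "'a::chilbert_space \<Rightarrow> 'a"
  assumes "bounded_clinear T" and "\<And>x y. cinner (T x) y = cinner x (S y)"
  shows "adj T = S"
proof
  fix y show "adj T y = S y"
  proof (rule cinner_ext_right)
    fix z show "cinner z (adj T y) = cinner z (S y)"
      by (simp only: adj_prop(2)[OF assms(1), symmetric] assms(2))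
  qed
qed


definition sqc :: "nat \<Rightarrow> real" where "sqc n = (-1)^n * ((1/2::real) gchoose n)"
definition sqb :: "nat \<Rightarrow> real" where "sqb n = (-1)^n * ((-1/2::real) gchoose n)"

lemma sqc_Suc: "sqc (Suc k) = sqb (Suc k) - sqb k"
proof -
  have "(1/2::real) gchoose (Suc k) = ((-1/2) + 1) gchoose (Suc k)" by simp
  also have "\<dots> = ((-1/2) gchoose k) + ((-1/2) gchoose (Suc k))" by (rule gbinomial_Suc_Suc)
  finally show ?thesis unfolding sqc_def sqb_def by (simp add: algebra_simps)
qed

lemma sqb_poch: "sqb n = pochhammer (1/2) n / fact n"
proof -
  have "sqb n = (-1)^n * ((-1)^n * pochhammer (1/2) n / fact n)"
    unfolding sqb_def gbinomial_pochhammer by simp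
  also have "\<dots> = ((-1)^n * (-1)^n) * pochhammer (1/2) n / fact n" by simp
  also have "(-1::real)^n * (-1)^n = 1" by (simp flip: power_add)
  finally show ?thesis by simp
qed

lemma sqb_pos: "sqb n > 0"
  unfolding sqb_poch by (intro divide_pos_pos pochhammer_pos) auto

lemma sqb_dec: "sqb (Suc n) \<le> sqb n"
proof -
  have "sqb (Suc n) = sqb n * ((1/2 + real n) / real (Suc n))"
    unfolding sqb_poch by (simp add: pochhammer_Suc field_simps)
  also have "\<dots> \<le> sqb n * 1"
    using sqb_pos[of n] by (intro mult_left_mono) (auto simp: field_simps)
  finally show ?thesis by simp
qed

lemma sqc_abs_summable: "summable (\<lambda>n. \<bar>sqc n\<bar>)"
proof -
  have "decseq sqb" by (rule decseq_SucI) (rule sqb_dec)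
  then obtain L where L: "sqb \<longlonglongrightarrow> L" using decseq_convergent[of sqb 0] sqb_pos less_imp_le by metis
  have "summable (\<lambda>n. sqb n - sqb (Suc n))" by (rule telescope_summable'[OF L])
  moreover have "\<bar>sqc (Suc n)\<bar> = sqb n - sqb (Suc n)" for n
    using sqc_Suc[of n] sqb_dec[of n] by simp
  ultimately have "summable (\<lambda>n. \<bar>sqc (Suc n)\<bar>)" by simp
  then show ?thesis using summable_Suc_iff[of "\<lambda>n. \<bar>sqc n\<bar>"] by simp
qed

lemma sqc_cauchy:
  "(\<Sum>i\<le>k. sqc i * sqc (k - i)) = (if k = 0 then 1 else if k = 1 then -1 else 0)"
proof -
  have "(\<Sum>i\<le>k. sqc i * sqc (k - i)) = (\<Sum>i\<le>k. (-1)^k * (((1/2::real) gchoose i) * ((1/2) gchoose (k - i))))"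
  proof (rule sum.cong)
    fix i assume "i \<in> {..k}"
    then have "(-1::real)^i * (-1)^(k - i) = (-1)^k" by (simp flip: power_add)
    then show "sqc i * sqc (k - i) = (-1)^k * (((1/2::real) gchoose i) * ((1/2) gchoose (k - i)))"
      unfolding sqc_def by (metis (no_types, lifting) mult.assoc mult.left_commute)
  qed simp
  also have "\<dots> = (-1)^k * (\<Sum>i=0..k. ((1/2::real) gchoose i) * ((1/2) gchoose (k - i)))"
    by (simp add: sum_distrib_left atLeast0AtMost)
  also have "\<dots> = (-1)^k * ((1::real) gchoose k)"
    using gbinomial_Vandermonde[of "1/2::real" "1/2" k] by simp
  also have "\<dots> = (if k = 0 then 1 else if k = 1 then -1 else 0)"
  proof -
    have "real (1 choose k) = (of_nat 1 gchoose k)" by (rule binomial_gbinomial)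
    then have "(1::real) gchoose k = of_nat (1 choose k)" by simp
    moreover have "k > 1 \<Longrightarrow> (1::nat) choose k = 0" by simp
    ultimately show ?thesis by (cases "k = 0"; cases "k = 1") auto
  qed
  finally show ?thesis .
qed

lemma bilinear_Cauchy_product_sums:
  fixes a :: "nat \<Rightarrow> 'a::banach" and b :: "nat \<Rightarrow> 'b::banach" and prod :: "'a \<Rightarrow> 'b \<Rightarrow> 'c::banach"
  assumes bb: "bounded_bilinear prod" and nm: "\<And>x y. norm (prod x y) \<le> norm x * norm y"
    and a: "summable (\<lambda>k. norm (a k))"
    and b: "summable (\<lambda>k. norm (b k))"
  shows "(\<lambda>k. \<Sum>i\<le>k. prod (a i) (b (k - i))) sums (prod (\<Sum>k. a k) (\<Sum>k. b k))"
proof -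
  let ?S1 = "\<lambda>n::nat. {..<n} \<times> {..<n}"
  let ?S2 = "\<lambda>n::nat. {(i,j). i + j < n}"
  have S1_mono: "\<And>m n. m \<le> n \<Longrightarrow> ?S1 m \<subseteq> ?S1 n" by auto
  have S2_le_S1: "\<And>n. ?S2 n \<subseteq> ?S1 n" by auto
  have S1_le_S2: "\<And>n. ?S1 (n div 2) \<subseteq> ?S2 n" by auto
  have finite_S1: "\<And>n. finite (?S1 n)" by simp
  with S2_le_S1 have finite_S2: "\<And>n. finite (?S2 n)" by (rule finite_subset)
  let ?g = "\<lambda>(i,j). prod (a i) (b j)"
  let ?f = "\<lambda>(i,j). norm (a i) * norm (b j)"
  have f_nonneg: "\<And>x. 0 \<le> ?f x" by auto
  then have norm_sum_f: "\<And>A. norm (sum ?f A) = sum ?f A"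
    unfolding real_norm_def
    by (simp only: abs_of_nonneg sum_nonneg [rule_format])
  have sp: "prod (sum a A) (sum b B) = (\<Sum>(i,j)\<in>A \<times> B. prod (a i) (b j))" if "finite A" "finite B" for A B
  proof -
    have "prod (sum a A) (sum b B) = (\<Sum>i\<in>A. prod (a i) (sum b B))" by (rule bounded_bilinear.sum_left[OF bb])
    also have "\<dots> = (\<Sum>i\<in>A. \<Sum>j\<in>B. prod (a i) (b j))" by (simp only: bounded_bilinear.sum_right[OF bb])
    also have "\<dots> = (\<Sum>(i,j)\<in>A \<times> B. prod (a i) (b j))" by (rule sum.cartesian_product)
    finally show ?thesis .
  qed
  have "(\<lambda>n. prod (\<Sum>k<n. a k) (\<Sum>k<n. b k)) \<longlonglongrightarrow> prod (\<Sum>k. a k) (\<Sum>k. b k)"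
    by (intro bounded_bilinear.tendsto[OF bb] summable_LIMSEQ summable_norm_cancel [OF a] summable_norm_cancel [OF b])
  then have 1: "(\<lambda>n. sum ?g (?S1 n)) \<longlonglongrightarrow> prod (\<Sum>k. a k) (\<Sum>k. b k)"
    by (simp only: sp finite_lessThan)
  have "(\<lambda>n. (\<Sum>k<n. norm (a k)) * (\<Sum>k<n. norm (b k))) \<longlonglongrightarrow> (\<Sum>k. norm (a k)) * (\<Sum>k. norm (b k))"
    using a b by (intro tendsto_mult summable_LIMSEQ)
  then have "(\<lambda>n. sum ?f (?S1 n)) \<longlonglongrightarrow> (\<Sum>k. norm (a k)) * (\<Sum>k. norm (b k))"
    by (simp only: sum_product sum.Sigma [rule_format] finite_lessThan)
  then have "convergent (\<lambda>n. sum ?f (?S1 n))"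
    by (rule convergentI)
  then have Cauchy: "Cauchy (\<lambda>n. sum ?f (?S1 n))"
    by (rule convergent_Cauchy)
  have "Zfun (\<lambda>n. sum ?f (?S1 n - ?S2 n)) sequentially"
  proof (rule ZfunI, simp only: eventually_sequentially norm_sum_f)
    fix r :: real
    assume r: "0 < r"
    from CauchyD [OF Cauchy r] obtain N
      where "\<forall>m\<ge>N. \<forall>n\<ge>N. norm (sum ?f (?S1 m) - sum ?f (?S1 n)) < r" ..
    then have "\<And>m n. N \<le> n \<Longrightarrow> n \<le> m \<Longrightarrow> norm (sum ?f (?S1 m - ?S1 n)) < r"
      by (simp only: sum_diff finite_S1 S1_mono)
    then have N: "\<And>m n. N \<le> n \<Longrightarrow> n \<le> m \<Longrightarrow> sum ?f (?S1 m - ?S1 n) < r"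
      by (simp only: norm_sum_f)
    show "\<exists>N. \<forall>n\<ge>N. sum ?f (?S1 n - ?S2 n) < r"
    proof (intro exI allI impI)
      fix n
      assume "2 * N \<le> n"
      then have n: "N \<le> n div 2" by simp
      have "sum ?f (?S1 n - ?S2 n) \<le> sum ?f (?S1 n - ?S1 (n div 2))"
        by (intro sum_mono2 finite_Diff finite_S1 f_nonneg Diff_mono subset_refl S1_le_S2)
      also have "\<dots> < r"
        using n div_le_dividend by (rule N)
      finally show "sum ?f (?S1 n - ?S2 n) < r" .
    qed
  qed
  then have "Zfun (\<lambda>n. sum ?g (?S1 n - ?S2 n)) sequentially"
    apply (rule Zfun_le [rule_format])
    apply (simp only: norm_sum_f)
    apply (rule order_trans [OF norm_sum sum_mono])
    apply (auto simp add: nm)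
    done
  then have 2: "(\<lambda>n. sum ?g (?S1 n) - sum ?g (?S2 n)) \<longlonglongrightarrow> 0"
    unfolding tendsto_Zfun_iff diff_0_right
    by (simp only: sum_diff finite_S1 S2_le_S1)
  with 1 have "(\<lambda>n. sum ?g (?S2 n)) \<longlonglongrightarrow> prod (\<Sum>k. a k) (\<Sum>k. b k)"
    by (rule Lim_transform2)
  then show ?thesis
    by (simp only: sums_def sum.triangle_reindex)
qed


lemma funpow_bl:
  fixes C :: "'a::real_normed_vector \<Rightarrow> 'a"
  assumes C: "bounded_linear C" shows "bounded_linear (C ^^ n)"
proof (induction n)
  case 0
  have eq: "C ^^ 0 = (\<lambda>x. x)" by (simp add: fun_eq_iff)
  show ?case unfolding eq by (rule bounded_linear_ident)
next
  case (Suc n)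
  have "bounded_linear (\<lambda>x. C ((C ^^ n) x))" by (rule bounded_linear_compose[OF C Suc.IH])
  then show ?case by (simp add: o_def)
qed

lemma sqrt_op:
  fixes B :: "'a::chilbert_space \<Rightarrow> 'a"
  assumes Bb: "bounded_clinear B" and Bs: "\<And>x y. cinner (B x) y = cinner x (B y)"
  shows "\<exists>R. bounded_clinear R \<and> (\<forall>x y. cinner (R x) y = cinner x (R y)) \<and> (\<forall>x. R (R x) = B (B x)) \<and>
    (\<forall>T. bounded_linear T \<longrightarrow> (\<forall>x. T (B (B x)) = B (B (T x))) \<longrightarrow> (\<forall>x. T (R x) = R (T x)))"
proof -
  have Bl: "bounded_linear B" using Bb by (rule bcl_lin)
  obtain K where K: "K > 0" "\<And>x. norm (B x) \<le> norm x * K"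
    using bounded_linear.pos_bounded[OF Bl] by blast
  define c where "c = K\<^sup>2"
  have c0: "c > 0" using K by (simp add: c_def)
  define C where "C = (\<lambda>x. x - (1/c) *\<^sub>R B (B x))"
  have Cl: "bounded_linear C" unfolding C_def
    by (intro bounded_linear_sub bounded_linear_ident bounded_linear_compose[OF bounded_linear_scaleR_right]
        bounded_linear_compose[OF Bl Bl])
  have Cnorm: "norm (C x) \<le> norm x" for x
  proof -
    have BB: "norm (B (B x)) \<le> norm (B x) * K" by (rule K(2))
    have BB2: "(norm (B (B x)))\<^sup>2 \<le> (norm (B x))\<^sup>2 * c"
      using BB unfolding c_def by (metis norm_ge_zero power2_le_imp_le power_mono power_mult_distrib)
    have re: "Re (cinner x (B (B x))) = (norm (B x))\<^sup>2"
      by (simp add: norm_sq_Re Bs)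
    have "(norm (C x))\<^sup>2 = (norm x)\<^sup>2 - 2 * ((1/c) * (norm (B x))\<^sup>2) + (1/c)\<^sup>2 * (norm (B (B x)))\<^sup>2"
    proof -
      have nn: "(norm ((1/c) *\<^sub>R B (B x)))\<^sup>2 = (1/c)\<^sup>2 * (norm (B (B x)))\<^sup>2"
        by (simp only: norm_scaleR power_mult_distrib power2_abs)
      have rr: "Re (cinner x ((1/c) *\<^sub>R B (B x))) = (1/c) * (norm (B x))\<^sup>2"
        by (simp add: cinner_scaleR_right re)
      show ?thesis unfolding C_def norm_diff_sq nn rr ..
    qed
    also have "(1/c)\<^sup>2 * (norm (B (B x)))\<^sup>2 \<le> (1/c)\<^sup>2 * ((norm (B x))\<^sup>2 * c)"
      by (intro mult_left_mono BB2) simp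
    also have "(1/c)\<^sup>2 * ((norm (B x))\<^sup>2 * c) = (1/c) * (norm (B x))\<^sup>2"
      using c0 by (simp add: power2_eq_square field_simps)
    finally have "(norm (C x))\<^sup>2 \<le> (norm x)\<^sup>2 - (1/c) * (norm (B x))\<^sup>2" by simp
    also have "\<dots> \<le> (norm x)\<^sup>2" using c0 by simp
    finally have "(norm (C x))\<^sup>2 \<le> (norm x)\<^sup>2" .
    from power2_le_imp_le[OF this norm_ge_zero] show ?thesis .
  qed
  have Cs: "cinner (C x) y = cinner x (C y)" for x y
    unfolding C_def by (simp add: cinner_diff_left cinner_diff_right cinner_scaleR_left cinner_scaleR_right Bs)
  have Cnl: "bounded_linear (C ^^ n)" for n by (rule funpow_bl[OF Cl])
  have Cnnorm: "norm ((C ^^ n) x) \<le> norm x" for n x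
    by (induction n) (auto intro: order_trans[OF Cnorm])
  have Cns: "cinner ((C ^^ n) x) y = cinner x ((C ^^ n) y)" for n x y
    by (induction n arbitrary: x y) (auto simp: Cs funpow_swap1)
  define Cp where "Cp n = Blinfun (C ^^ n)" for n
  have Cp_app: "blinfun_apply (Cp n) = C ^^ n" for n
    unfolding Cp_def by (rule bounded_linear_Blinfun_apply[OF Cnl])
  have Cp_norm: "norm (Cp n) \<le> 1" for n
    by (rule norm_blinfun_bound) (auto simp: Cp_app Cnnorm)
  have Cp_comp: "Cp i o\<^sub>L Cp j = Cp (i + j)" for i j
    by (rule blinfun_eqI) (simp add: Cp_app funpow_add)
  define tm where "tm n = sqc n *\<^sub>R Cp n" for n
  have tm_sum: "summable (\<lambda>n. norm (tm n))"
  proof (rule summable_comparison_test'[OF sqc_abs_summable])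
    fix n
    have "norm (tm n) = \<bar>sqc n\<bar> * norm (Cp n)" by (simp add: tm_def)
    also have "\<dots> \<le> \<bar>sqc n\<bar> * 1" by (intro mult_left_mono Cp_norm) simp
    finally show "norm (norm (tm n)) \<le> \<bar>sqc n\<bar>" by simp
  qed
  define A where "A = (\<Sum>n. tm n)"
  have cp: "(\<lambda>k. \<Sum>i\<le>k. tm i o\<^sub>L tm (k - i)) sums (A o\<^sub>L A)"
    unfolding A_def
    by (rule bilinear_Cauchy_product_sums[OF bounded_bilinear_blinfun_compose norm_blinfun_compose tm_sum tm_sum])
  have tt: "(\<Sum>i\<le>k. tm i o\<^sub>L tm (k - i)) = (if k = 0 then 1 else if k = 1 then -1 else 0) *\<^sub>R Cp k" for k
  proof -
    have "(\<Sum>i\<le>k. tm i o\<^sub>L tm (k - i)) = (\<Sum>i\<le>k. (sqc i * sqc (k - i)) *\<^sub>R Cp k)"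
    proof (rule sum.cong)
      fix i assume "i \<in> {..k}"
      then have ik: "i + (k - i) = k" by simp
      show "tm i o\<^sub>L tm (k - i) = (sqc i * sqc (k - i)) *\<^sub>R Cp k"
        unfolding tm_def Cp_comp[symmetric, of i "k - i", unfolded ik]
        by (rule blinfun_eqI) (simp add: blinfun.scaleR_right blinfun.scaleR_left)
    qed simp
    also have "\<dots> = (\<Sum>i\<le>k. sqc i * sqc (k - i)) *\<^sub>R Cp k" by (simp add: scaleR_sum_left)
    finally show ?thesis by (simp add: sqc_cauchy)
  qed
  have "(\<lambda>k. (if k = 0 then 1 else if k = 1 then -1 else 0) *\<^sub>R Cp k) sums (\<Sum>k\<in>{0,1}. (if k = 0 then 1 else if k = 1 then -1 else 0) *\<^sub>R Cp k)"
    by (rule sums_finite) auto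
  then have "(\<lambda>k. \<Sum>i\<le>k. tm i o\<^sub>L tm (k - i)) sums (Cp 0 - Cp 1)" by (simp add: tt)
  then have AA: "A o\<^sub>L A = Cp 0 - Cp 1" using cp sums_unique2 by blast
  have tm_s: "summable tm" using tm_sum by (rule summable_norm_cancel)
  have Aapp: "blinfun_apply A x = (\<Sum>n. sqc n *\<^sub>R (C ^^ n) x)" for x
  proof -
    have "blinfun_apply A x = (\<Sum>n. blinfun_apply (tm n) x)"
      unfolding A_def by (rule bounded_linear.suminf[OF blinfun.bounded_linear_left tm_s])
    then show ?thesis by (simp add: tm_def Cp_app blinfun.scaleR_left)
  qed
  have Asum: "summable (\<lambda>n. sqc n *\<^sub>R (C ^^ n) x)" for x
    using bounded_linear.summable[OF blinfun.bounded_linear_left[of x] tm_s] by (simp add: tm_def Cp_app blinfun.scaleR_left)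
  have AAx: "blinfun_apply A (blinfun_apply A x) = x - C x" for x
  proof -
    have "blinfun_apply A (blinfun_apply A x) = blinfun_apply (A o\<^sub>L A) x" by simp
    also have "\<dots> = x - C x" unfolding AA by (simp add: blinfun.diff_left Cp_app)
    finally show ?thesis .
  qed
  have As: "cinner (blinfun_apply A x) y = cinner x (blinfun_apply A y)" for x y
  proof -
    have "cinner (blinfun_apply A x) y = (\<Sum>n. cinner (sqc n *\<^sub>R (C ^^ n) x) y)"
      unfolding Aapp by (rule bounded_linear.suminf[OF bounded_linear_cinner_left Asum])
    also have "\<dots> = (\<Sum>n. cinner x (sqc n *\<^sub>R (C ^^ n) y))"
      by (simp add: cinner_scaleR_left cinner_scaleR_right Cns)
    also have "\<dots> = cinner x (blinfun_apply A y)"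
      unfolding Aapp by (rule bounded_linear.suminf[OF bounded_linear_cinner_right Asum, symmetric])
    finally show ?thesis .
  qed
  have Acomm: "T (blinfun_apply A x) = blinfun_apply A (T x)"
    if T: "bounded_linear T" and TB: "\<forall>x. T (B (B x)) = B (B (T x))" for T x
  proof -
    have TC: "T (C y) = C (T y)" for y
      unfolding C_def using TB T by (simp add: linear_simps)
    have TCn: "T ((C ^^ n) y) = (C ^^ n) (T y)" for n y
      by (induction n) (auto simp: TC)
    have "T (blinfun_apply A x) = (\<Sum>n. T (sqc n *\<^sub>R (C ^^ n) x))"
      unfolding Aapp by (rule bounded_linear.suminf[OF T Asum])
    also have "\<dots> = (\<Sum>n. sqc n *\<^sub>R (C ^^ n) (T x))"
      using T by (simp add: linear_simps TCn)
    also have "\<dots> = blinfun_apply A (T x)" unfolding Aapp ..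
    finally show ?thesis .
  qed
  define R where "R = (\<lambda>x. sqrt c *\<^sub>R blinfun_apply A x)"
  have Rl: "bounded_linear R" unfolding R_def
    by (intro bounded_linear_compose[OF bounded_linear_scaleR_right] blinfun.bounded_linear_right)
  have Rcomm: "\<forall>T. bounded_linear T \<longrightarrow> (\<forall>x. T (B (B x)) = B (B (T x))) \<longrightarrow> (\<forall>x. T (R x) = R (T x))"
  proof (intro allI impI)
    fix T x assume T: "bounded_linear T" and TB: "\<forall>x. T (B (B x)) = B (B (T x))"
    show "T (R x) = R (T x)" unfolding R_def using T by (simp add: linear_simps Acomm[OF T TB])
  qed
  have "bounded_clinear R"
  proof -
    have "R (a *\<^sub>C x) = a *\<^sub>C R x" for a x
    proof -
      have h: "a *\<^sub>C (B (B x)) = B (B (a *\<^sub>C x))" for x by (simp add: bcl_scaleC[OF Bb])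
      from Rcomm[rule_format, OF bounded_linear_scaleC_const[of a] h] show ?thesis by simp
    qed
    then show ?thesis using Rl unfolding bounded_clinear_def by blast
  qed
  moreover have "cinner (R x) y = cinner x (R y)" for x y
    unfolding R_def by (simp add: cinner_scaleR_left cinner_scaleR_right As)
  moreover have "R (R x) = B (B x)" for x
  proof -
    have "R (R x) = (sqrt c * sqrt c) *\<^sub>R blinfun_apply A (blinfun_apply A x)"
      unfolding R_def by (simp add: blinfun.scaleR_right)
    also have "\<dots> = c *\<^sub>R (x - C x)" using c0 by (simp add: AAx)
    also have "\<dots> = B (B x)" unfolding C_def using c0 by simp
    finally show ?thesis .
  qed
  ultimately show ?thesis using Rcomm by blast
qed


lemma sa_ker_eq:
  fixes A :: "'a::chilbert_space \<Rightarrow> 'a"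
  assumes bA: "bounded_clinear A" and sA: "\<And>x y. cinner (A x) y = cinner x (A y)"
  shows "{x. A x = 0} = horth (range A)"
proof (intro set_eqI iffI)
  fix x assume "x \<in> {x. A x = 0}"
  then show "x \<in> horth (range A)" by (auto simp: horth_def sA)
next
  fix x assume "x \<in> horth (range A)"
  then have "cinner (A (A x)) x = 0" by (auto simp: horth_def)
  then have "cinner (A x) (A x) = 0" using sA[of "A x" x] by simp
  then show "x \<in> {x. A x = 0}" by (simp add: cinner_eq_zero_iff)
qed

lemma sa_range_orth:
  fixes A :: "'a::chilbert_space \<Rightarrow> 'a"
  assumes sA: "\<And>x y. cinner (A x) y = cinner x (A y)"
  shows "A y \<in> horth {x. A x = 0}"
  unfolding horth_def by (simp add: sA[symmetric])

lemma proj_comm: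
  fixes T :: "'a::chilbert_space \<Rightarrow> 'a"
  assumes cl: "closed V" and sub: "hsub V" and bT: "bounded_clinear T"
    and TV: "\<And>v. v \<in> V \<Longrightarrow> T v \<in> V" and TV': "\<And>v. v \<in> V \<Longrightarrow> adj T v \<in> V"
  shows "T (hproj V x) = hproj V (T x)"
proof (rule hproj_unique[OF cl sub, symmetric])
  show "T (hproj V x) \<in> V" by (rule TV[OF hproj(1)[OF cl sub]])
  fix v assume v: "v \<in> V"
  have "cinner v (T x - T (hproj V x)) = cinner v (T (x - hproj V x))" by (simp add: bcl_diff[OF bT])
  also have "\<dots> = cinner (adj T v) (x - hproj V x)" by (rule adj_left[OF bT, symmetric])
  also have "\<dots> = 0" by (rule hproj(2)[OF cl sub TV'[OF v]])
  finally show "cinner v (T x - T (hproj V x)) = 0" .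
qed

lemma comm_projs:
  fixes T A :: "'a::chilbert_space \<Rightarrow> 'a"
  assumes bT: "bounded_clinear T" and bA: "bounded_clinear A"
    and c1: "\<And>x. T (A x) = A (T x)" and c2: "\<And>x. adj T (A x) = A (adj T x)"
  shows "T (hproj {x. A x = 0} y) = hproj {x. A x = 0} (T y)"
    and "T (hproj (horth {x. A x = 0}) y) = hproj (horth {x. A x = 0}) (T y)"
proof -
  have bT': "bounded_clinear (adj T)" by (rule adj_prop(1)[OF bT])
  have k1: "T v \<in> {x. A x = 0}" if "v \<in> {x. A x = 0}" for v
    using that c1[of v] bcl_zero[OF bT] by simp
  have k2: "adj T v \<in> {x. A x = 0}" if "v \<in> {x. A x = 0}" for v
    using that c2[of v] bcl_zero[OF bT'] by simp
  show "T (hproj {x. A x = 0} y) = hproj {x. A x = 0} (T y)"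
    by (rule proj_comm[OF ker_closed[OF bA] ker_hsub[OF bA] bT k1 k2])
  have o1: "T v \<in> horth {x. A x = 0}" if "v \<in> horth {x. A x = 0}" for v
    unfolding horth_def
  proof (intro CollectI ballI)
    fix k assume "k \<in> {x. A x = 0}"
    then have "cinner (adj T k) v = 0" using k2 that by (auto simp: horth_def)
    then show "cinner k (T v) = 0" by (simp add: adj_left[OF bT])
  qed
  have o2: "adj T v \<in> horth {x. A x = 0}" if "v \<in> horth {x. A x = 0}" for v
    unfolding horth_def
  proof (intro CollectI ballI)
    fix k assume "k \<in> {x. A x = 0}"
    then have "cinner (T k) v = 0" using k1 that by (auto simp: horth_def)
    then show "cinner k (adj T v) = 0" by (simp add: adj_prop(2)[OF bT])
  qed
  show "T (hproj (horth {x. A x = 0}) y) = hproj (horth {x. A x = 0}) (T y)"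
    by (rule proj_comm[OF horth_closed horth_hsub bT o1 o2])
qed

lemma commutant_adj:
  fixes M :: "('a::chilbert_space \<Rightarrow> 'a) set"
  assumes vN: "\<forall>T\<in>M. bounded_clinear T \<and> adj T \<in> M" and T: "T \<in> commutant M"
  shows "adj T \<in> commutant M"
proof -
  have bT: "bounded_clinear T" using T by (simp add: commutant_def)
  have cT: "\<And>X. X \<in> M \<Longrightarrow> T \<circ> X = X \<circ> T" using T by (simp add: commutant_def)
  have "adj T (X x) = X (adj T x)" if X: "X \<in> M" for X x
  proof (rule cinner_ext)
    fix z
    have bX: "bounded_clinear X" using vN X by blast
    have X': "adj X \<in> M" using vN X by blast
    have "T (adj X z) = adj X (T z)" using cT[OF X'] by (simp add: fun_eq_iff)
    then have "cinner (adj T (X x)) z = cinner x (adj X (T z))"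
      by (simp add: adj_left[OF bT] adj_prop(2)[OF bX])
    also have "\<dots> = cinner x (T (adj X z))" using \<open>T (adj X z) = adj X (T z)\<close> by simp
    also have "\<dots> = cinner (X (adj T x)) z" by (simp add: adj_left[OF bT] adj_prop(2)[OF bX])
    finally show "cinner (adj T (X x)) z = cinner (X (adj T x)) z" .
  qed
  then show ?thesis using adj_prop(1)[OF bT] by (simp add: commutant_def fun_eq_iff)
qed

lemma in_vN:
  fixes M :: "('a::chilbert_space \<Rightarrow> 'a) set"
  assumes vN: "von_neumann_algebra M" and bZ: "bounded_clinear Z"
    and c: "\<And>T x. T \<in> commutant M \<Longrightarrow> Z (T x) = T (Z x)"
  shows "Z \<in> M"
proof -
  have "Z \<in> commutant (commutant M)" unfolding commutant_def[of "commutant M"]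
    using bZ c by (auto simp: fun_eq_iff)
  then show ?thesis using vN by (simp add: von_neumann_algebra_def)
qed

lemma vN_comm:
  fixes M :: "('a::chilbert_space \<Rightarrow> 'a) set"
  assumes vN: "von_neumann_algebra M" and X: "X \<in> M" and T: "T \<in> commutant M"
  shows "T (X x) = X (T x)"
  using T X by (simp add: commutant_def fun_eq_iff)


lemma unitary_D:
  fixes U :: "'a::chilbert_space \<Rightarrow> 'a"
  assumes "unitary U"
  shows "bounded_clinear U" "\<And>x. adj U (U x) = x" "\<And>x. U (adj U x) = x"
  using assms by (auto simp: unitary_def fun_eq_iff)

lemma backward:
  fixes M :: "('h::chilbert_space \<Rightarrow> 'h) set" and U W :: "'h \<Rightarrow> 'h"
  assumes vN: "von_neumann_algebra M" and UM: "U \<in> M" and uU: "unitary U"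
    and WM: "W \<in> M" and uW: "unitary W" and eq: "adj U = adj W \<circ> U \<circ> W"
  shows "\<exists>S1\<in>M. \<exists>S2\<in>M. symmetry S1 \<and> symmetry S2 \<and> U = S1 \<circ> S2"
proof -
  have vN1: "\<forall>T\<in>M. bounded_clinear T \<and> adj T \<in> M" using vN by (simp add: von_neumann_algebra_def)
  define U' where "U' = adj U"
  define W' where "W' = adj W"
  have bU: "bounded_clinear U" and UU': "\<And>x. U (U' x) = x" and U'U: "\<And>x. U' (U x) = x"
    using unitary_D[OF uU] by (auto simp: U'_def)
  have bW: "bounded_clinear W" and WW': "\<And>x. W (W' x) = x" and W'W: "\<And>x. W' (W x) = x"
    using unitary_D[OF uW] by (auto simp: W'_def)
  have bU': "bounded_clinear U'" unfolding U'_def by (rule adj_prop(1)[OF bU])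
  have bW': "bounded_clinear W'" unfolding W'_def by (rule adj_prop(1)[OF bW])
  have iU: "\<And>x y. cinner (U x) y = cinner x (U' y)" unfolding U'_def by (rule adj_prop(2)[OF bU])
  have iW: "\<And>x y. cinner (W x) y = cinner x (W' y)" unfolding W'_def by (rule adj_prop(2)[OF bW])
  have iU': "\<And>x y. cinner (U' x) y = cinner x (U y)" unfolding U'_def by (rule adj_left[OF bU])
  have iW': "\<And>x y. cinner (W' x) y = cinner x (W y)" unfolding W'_def by (rule adj_left[OF bW])
  have W'M: "W' \<in> M" unfolding W'_def using vN1 WM by blast
  have U'M: "U' \<in> M" unfolding U'_def using vN1 UM by blast
  have eqx: "U' x = W' (U (W x))" for x using eq by (simp add: U'_def W'_def)
  have UW: "U (W x) = W (U' x)" for x by (simp add: eqx WW')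
  have W'U: "W' (U x) = U' (W' x)" for x by (simp add: eqx WW')
  have U'W: "U' (W x) = W (U x)" for x
  proof (rule cinner_ext)
    fix z
    have "cinner (U' (W x)) z = cinner x (W' (U z))" by (simp add: iU' iW)
    also have "\<dots> = cinner x (U' (W' z))" by (simp add: W'U)
    also have "\<dots> = cinner (W (U x)) z" by (simp add: iU iW)
    finally show "cinner (U' (W x)) z = cinner (W (U x)) z" .
  qed
  have UW': "U (W' x) = W' (U' x)" for x
    using U'W[of "W' x"] by (metis UU' W'W WW')
  define B where "B = (\<lambda>x. W x + W' x)"
  have bB: "bounded_clinear B" unfolding B_def by (rule bcl_add_fun[OF bW bW'])
  have sB: "cinner (B x) y = cinner x (B y)" for x y
    unfolding B_def by (simp add: cinner_add_left cinner_add_right iW iW')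
  have BU: "B (U x) = U' (B x)" for x
    unfolding B_def by (simp add: bcl_add[OF bU'] U'W W'U)
  have UB: "U (B x) = B (U' x)" for x
    unfolding B_def by (simp add: bcl_add[OF bU] UW UW')
  have WB: "W (B x) = B (W x)" for x
    unfolding B_def by (simp add: bcl_add[OF bW] WW' W'W)
  have W'B: "W' (B x) = B (W' x)" for x
    unfolding B_def by (simp add: bcl_add[OF bW'] WW' W'W add.commute)
  have BBU: "B (B (U x)) = U (B (B x))" for x by (simp add: BU UB)
  have BBU': "B (B (U' x)) = U' (B (B x))" for x
  proof -
    have "B (U' x) = U (B x)" by (simp add: UB)
    then show ?thesis by (simp add: BU)
  qed
  have commB: "T (B x) = B (T x)" if T: "T \<in> commutant M" for T x
  proof -
    have bT: "bounded_clinear T" using T by (simp add: commutant_def)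
    show ?thesis unfolding B_def
      by (simp add: bcl_add[OF bT] vN_comm[OF vN WM T] vN_comm[OF vN W'M T])
  qed
  obtain R where bR: "bounded_clinear R" and sR: "\<And>x y. cinner (R x) y = cinner x (R y)"
    and RR: "\<And>x. R (R x) = B (B x)"
    and Rc: "\<And>T x. bounded_linear T \<Longrightarrow> (\<forall>x. T (B (B x)) = B (B (T x))) \<Longrightarrow> T (R x) = R (T x)"
    using sqrt_op[OF bB sB] by blast
  have RcB: "T (R x) = R (T x)" if bT: "bounded_clinear T" and TB: "\<And>x. T (B x) = B (T x)" for T x
    using Rc[OF bcl_lin[OF bT]] TB by simp
  have RB: "R (B x) = B (R x)" for x by (rule RcB[OF bB, symmetric]) simp
  have RU: "U (R x) = R (U x)" for x by (rule Rc[OF bcl_lin[OF bU]]) (simp add: BBU)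
  have RU': "U' (R x) = R (U' x)" for x by (rule Rc[OF bcl_lin[OF bU']]) (simp add: BBU')
  have RW: "W (R x) = R (W x)" for x by (rule RcB[OF bW WB])
  have RW': "W' (R x) = R (W' x)" for x by (rule RcB[OF bW' W'B])
  define Bp where "Bp = (\<lambda>x. R x + B x)"
  define Bm where "Bm = (\<lambda>x. R x - B x)"
  have bBp: "bounded_clinear Bp" unfolding Bp_def by (rule bcl_add_fun[OF bR bB])
  have bBm: "bounded_clinear Bm" unfolding Bm_def by (rule bcl_diff_fun[OF bR bB])
  have sBp: "cinner (Bp x) y = cinner x (Bp y)" for x y
    unfolding Bp_def by (simp add: cinner_add_left cinner_add_right sR sB)
  have sBm: "cinner (Bm x) y = cinner x (Bm y)" for x y
    unfolding Bm_def by (simp add: cinner_diff_left cinner_diff_right sR sB)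
  have BpBm: "Bp (Bm x) = 0" for x
    unfolding Bp_def Bm_def by (simp add: bcl_diff[OF bR] bcl_diff[OF bB] RR RB)
  have BmBp: "Bm (Bp x) = 0" for x
    unfolding Bp_def Bm_def by (simp add: bcl_add[OF bR] bcl_add[OF bB] RR RB)
  have BpBm_R: "Bp x + Bm x = 2 *\<^sub>R R x" for x
    unfolding Bp_def Bm_def by (simp add: scaleR_2)
  have BpBm_B: "Bp x - Bm x = 2 *\<^sub>R B x" for x
    unfolding Bp_def Bm_def by (simp add: scaleR_2)
  have kerRB: "B x = 0" if "R x = 0" for x
  proof -
    have "cinner (B x) (B x) = cinner (R x) (R x)" by (simp add: sB sR RR)
    then show ?thesis using that by (simp add: cinner_eq_zero_iff)
  qed
  have kerR: "Bp x = 0 \<and> Bm x = 0" if "R x = 0" for x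
    using that kerRB[OF that] by (simp add: Bp_def Bm_def)
  define Kp where "Kp = {x. Bp x = 0}"
  define Km where "Km = {x. Bm x = 0}"
  define K0 where "K0 = {x. R x = 0}"
  have clKp: "closed Kp" "hsub Kp" unfolding Kp_def by (rule ker_closed[OF bBp], rule ker_hsub[OF bBp])
  have clKm: "closed Km" "hsub Km" unfolding Km_def by (rule ker_closed[OF bBm], rule ker_hsub[OF bBm])
  have clK0: "closed K0" "hsub K0" unfolding K0_def by (rule ker_closed[OF bR], rule ker_hsub[OF bR])
  define V1 where "V1 = horth Kp"
  define V2 where "V2 = horth Km"
  have clV1: "closed V1" "hsub V1" unfolding V1_def by (rule horth_closed, rule horth_hsub)
  have clV2: "closed V2" "hsub V2" unfolding V2_def by (rule horth_closed, rule horth_hsub)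
  define P1 where "P1 = hproj V1"
  define P2 where "P2 = hproj V2"
  define PK where "PK = hproj K0"
  have bP1: "bounded_clinear P1" unfolding P1_def by (rule hproj_bcl[OF clV1])
  have bP2: "bounded_clinear P2" unfolding P2_def by (rule hproj_bcl[OF clV2])
  have bPK: "bounded_clinear PK" unfolding PK_def by (rule hproj_bcl[OF clK0])
  have K0Kp: "K0 \<subseteq> Kp" and K0Km: "K0 \<subseteq> Km" using kerR by (auto simp: K0_def Kp_def Km_def)
  have V1K0: "V1 \<subseteq> horth K0" unfolding V1_def by (rule horth_mono[OF K0Kp])
  have V2K0: "V2 \<subseteq> horth K0" unfolding V2_def by (rule horth_mono[OF K0Km])
  have Kp_eq: "Kp = horth (range Bp)" unfolding Kp_def by (rule sa_ker_eq[OF bBp sBp])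
  have Km_eq: "Km = horth (range Bm)" unfolding Km_def by (rule sa_ker_eq[OF bBm sBm])
  have V2Kp: "V2 \<subseteq> Kp"
  proof -
    have "range Bm \<subseteq> Kp" using BpBm by (auto simp: Kp_def)
    then have "horth (horth (range Bm)) \<subseteq> horth (horth Kp)" by (intro horth_mono)
    then show ?thesis unfolding V2_def Km_eq horth_horth[OF clKp] .
  qed
  have V1Km: "V1 \<subseteq> Km"
  proof -
    have "range Bp \<subseteq> Km" using BmBp by (auto simp: Km_def)
    then have "horth (horth (range Bp)) \<subseteq> horth (horth Km)" by (intro horth_mono)
    then show ?thesis unfolding V1_def Kp_eq horth_horth[OF clKm] .
  qed
  have P1Bp: "P1 (Bp x) = Bp x" for x unfolding P1_def
    by (rule hproj_id[OF clV1]) (unfold V1_def Kp_def, rule sa_range_orth[OF sBp])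
  have P2Bm: "P2 (Bm x) = Bm x" for x unfolding P2_def
    by (rule hproj_id[OF clV2]) (unfold V2_def Km_def, rule sa_range_orth[OF sBm])
  have P1z: "P1 y = 0" if "y \<in> Kp" for y unfolding P1_def
    by (rule hproj_zero[OF clV1]) (use that horth_horth_sup in \<open>auto simp: V1_def\<close>)
  have P2z: "P2 y = 0" if "y \<in> Km" for y unfolding P2_def
    by (rule hproj_zero[OF clV2]) (use that horth_horth_sup in \<open>auto simp: V2_def\<close>)
  have P1Bm: "P1 (Bm x) = 0" for x by (rule P1z) (simp add: Kp_def BpBm)
  have P2Bp: "P2 (Bp x) = 0" for x by (rule P2z) (simp add: Km_def BmBp)
  have P1V1: "P1 x \<in> V1" for x unfolding P1_def by (rule hproj(1)[OF clV1])
  have P2V2: "P2 x \<in> V2" for x unfolding P2_def by (rule hproj(1)[OF clV2])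
  have PKK0: "PK x \<in> K0" for x unfolding PK_def by (rule hproj(1)[OF clK0])
  have P1P2: "P1 (P2 x) = 0" for x by (rule P1z) (use P2V2 V2Kp in blast)
  have P2P1: "P2 (P1 x) = 0" for x by (rule P2z) (use P1V1 V1Km in blast)
  have P1P1: "P1 (P1 x) = P1 x" for x unfolding P1_def by (rule hproj_id[OF clV1 hproj(1)[OF clV1]])
  have P2P2: "P2 (P2 x) = P2 x" for x unfolding P2_def by (rule hproj_id[OF clV2 hproj(1)[OF clV2]])
  have PKPK: "PK (PK x) = PK x" for x unfolding PK_def by (rule hproj_id[OF clK0 hproj(1)[OF clK0]])
  have P1PK: "P1 (PK x) = 0" for x by (rule P1z) (use PKK0 K0Kp in blast)
  have P2PK: "P2 (PK x) = 0" for x by (rule P2z) (use PKK0 K0Km in blast)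
  have PKh: "PK y = 0" if "y \<in> horth K0" for y unfolding PK_def
    by (rule hproj_zero[OF clK0 that])
  have PKP1: "PK (P1 x) = 0" for x by (rule PKh) (use P1V1 V1K0 in blast)
  have PKP2: "PK (P2 x) = 0" for x by (rule PKh) (use P2V2 V2K0 in blast)
  have decomp: "P1 x + P2 x + PK x = x" for x
  proof -
    define q where "q = x - PK x"
    have qh: "q \<in> horth K0" unfolding q_def PK_def by (rule hproj_orth[OF clK0])
    have p1q: "P1 q = P1 x" unfolding q_def by (simp add: bcl_diff[OF bP1] P1PK)
    have p2q: "P2 q = P2 x" unfolding q_def by (simp add: bcl_diff[OF bP2] P2PK)
    define r where "r = q - P1 q - P2 q"
    have rV1: "r \<in> horth V1" unfolding horth_def
    proof (intro CollectI ballI)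
      fix v assume v: "v \<in> V1"
      have a: "cinner v (q - P1 q) = 0" unfolding P1_def by (rule hproj(2)[OF clV1 v])
      have "P2 q \<in> Kp" using P2V2 V2Kp by blast
      then have "cinner (P2 q) v = 0" using v by (auto simp: V1_def horth_def)
      then have b: "cinner v (P2 q) = 0" using cinner_commute[of v "P2 q"] by simp
      show "cinner v r = 0" unfolding r_def using a b by (simp add: cinner_diff_right)
    qed
    have rV2: "r \<in> horth V2" unfolding horth_def
    proof (intro CollectI ballI)
      fix v assume v: "v \<in> V2"
      have a: "cinner v (q - P2 q) = 0" unfolding P2_def by (rule hproj(2)[OF clV2 v])
      have "P1 q \<in> Km" using P1V1 V1Km by blast
      then have "cinner (P1 q) v = 0" using v by (auto simp: V2_def horth_def)
      then have b: "cinner v (P1 q) = 0" using cinner_commute[of v "P1 q"] by simp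
      have "r = (q - P2 q) - P1 q" unfolding r_def by simp
      then show "cinner v r = 0" using a b by (simp add: cinner_diff_right)
    qed
    have "r \<in> Kp" using rV1 unfolding V1_def horth_horth[OF clKp] .
    moreover have "r \<in> Km" using rV2 unfolding V2_def horth_horth[OF clKm] .
    ultimately have "2 *\<^sub>R R r = 0" using BpBm_R[of r] by (simp add: Kp_def Km_def)
    then have rK0: "r \<in> K0" by (simp add: K0_def)
    have "r \<in> horth K0" unfolding r_def
      using qh P1V1 P2V2 V1K0 V2K0 by (intro hsub_diff[OF horth_hsub]) blast+
    with rK0 have "cinner r r = 0" by (auto simp: horth_def)
    then have "r = 0" by (simp add: cinner_eq_zero_iff)
    then have "P1 x + P2 x = x - PK x" using p1q p2q by (simp add: r_def q_def algebra_simps)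
    then show ?thesis by (simp add: algebra_simps)
  qed
  have comm3: "T (P1 x) = P1 (T x) \<and> T (P2 x) = P2 (T x) \<and> T (PK x) = PK (T x)"
    if bT: "bounded_clinear T" and TB: "\<And>x. T (B x) = B (T x)" and TB': "\<And>x. adj T (B x) = B (adj T x)" for T x
  proof -
    have bT': "bounded_clinear (adj T)" by (rule adj_prop(1)[OF bT])
    have TR: "T (R y) = R (T y)" for y by (rule RcB[OF bT TB])
    have TR': "adj T (R y) = R (adj T y)" for y by (rule RcB[OF bT' TB'])
    have TBp: "T (Bp y) = Bp (T y)" for y unfolding Bp_def by (simp add: bcl_add[OF bT] TR TB)
    have TBp': "adj T (Bp y) = Bp (adj T y)" for y unfolding Bp_def by (simp add: bcl_add[OF bT'] TR' TB')
    have TBm: "T (Bm y) = Bm (T y)" for y unfolding Bm_def by (simp add: bcl_diff[OF bT] TR TB)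
    have TBm': "adj T (Bm y) = Bm (adj T y)" for y unfolding Bm_def by (simp add: bcl_diff[OF bT'] TR' TB')
    show ?thesis
      unfolding P1_def P2_def PK_def V1_def V2_def Kp_def Km_def K0_def
      using comm_projs(2)[OF bT bBp TBp TBp'] comm_projs(2)[OF bT bBm TBm TBm'] comm_projs(1)[OF bT bR TR TR']
      by blast
  qed
  have adjW: "adj W = W'" by (simp add: W'_def)
  have adjW': "adj W' = W"
    by (rule adj_eq[OF bW']) (simp add: iW')
  have Wc: "W (P1 x) = P1 (W x) \<and> W (P2 x) = P2 (W x) \<and> W (PK x) = PK (W x)" for x
    by (rule comm3[OF bW WB]) (simp add: adjW W'B)
  have WP1: "P1 (W x) = W (P1 x)" and WP2: "P2 (W x) = W (P2 x)" and WPKc: "PK (W x) = W (PK x)" for x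
    using Wc[of x] by simp_all
  have W'c: "W' (P1 x) = P1 (W' x) \<and> W' (P2 x) = P2 (W' x) \<and> W' (PK x) = PK (W' x)" for x
    by (rule comm3[OF bW' W'B]) (simp add: adjW' WB)
  have UPK: "U (PK x) = PK (U x)" for x
  proof -
    have adjU: "adj U = U'" by (simp add: U'_def)
    show ?thesis unfolding PK_def K0_def
      by (rule comm_projs(1)[OF bU bR RU]) (simp add: adjU RU')
  qed
  have Tc: "T (P1 x) = P1 (T x) \<and> T (P2 x) = P2 (T x) \<and> T (PK x) = PK (T x)"
    if T: "T \<in> commutant M" for T x
  proof -
    have bT: "bounded_clinear T" using T by (simp add: commutant_def)
    have T': "adj T \<in> commutant M" by (rule commutant_adj[OF vN1 T])
    show ?thesis by (rule comm3[OF bT commB[OF T] commB[OF T']])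
  qed
  define S where "S = (\<lambda>x. P1 x - P2 x)"
  have bS: "bounded_clinear S" unfolding S_def by (rule bcl_diff_fun[OF bP1 bP2])
  have SR: "S (R x) = B x" for x
  proof -
    have "2 *\<^sub>R S (R x) = S (2 *\<^sub>R R x)" by (simp add: bcl_scaleR[OF bS])
    also have "\<dots> = S (Bp x + Bm x)" by (simp add: BpBm_R)
    also have "\<dots> = Bp x - Bm x" unfolding S_def
      by (simp add: bcl_add[OF bP1] bcl_add[OF bP2] P1Bp P1Bm P2Bp P2Bm)
    also have "\<dots> = 2 *\<^sub>R B x" by (rule BpBm_B)
    finally show ?thesis by simp
  qed
  have SK0: "S y = 0" if "y \<in> K0" for y
  proof -
    have "P1 y = 0" using that K0Kp by (intro P1z) blast
    moreover have "P2 y = 0" using that K0Km by (intro P2z) blast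
    ultimately show ?thesis unfolding S_def by simp
  qed
  have SU: "S (U x) = U' (S x)" for x
  proof -
    define E where "E = {y. (\<lambda>y. S (U y) - U' (S y)) y = 0}"
    have bE: "bounded_clinear (\<lambda>y. S (U y) - U' (S y))"
      by (intro bcl_diff_fun bcl_comp'[OF bS bU] bcl_comp'[OF bU' bS])
    have clE: "closed E" "hsub E" unfolding E_def by (rule ker_closed[OF bE], rule ker_hsub[OF bE])
    have "range R \<subseteq> E"
    proof
      fix y assume "y \<in> range R"
      then obtain z where z: "y = R z" by blast
      have "S (U (R z)) = S (R (U z))" by (simp add: RU)
      also have "\<dots> = B (U z)" by (rule SR)
      also have "\<dots> = U' (B z)" by (rule BU)
      also have "\<dots> = U' (S (R z))" by (simp add: SR)
      finally show "y \<in> E" by (simp add: E_def z)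
    qed
    then have "horth (horth (range R)) \<subseteq> horth (horth E)" by (intro horth_mono)
    then have hE: "horth K0 \<subseteq> E"
      unfolding K0_def sa_ker_eq[OF bR sR] horth_horth[OF clE] .
    have kE: "K0 \<subseteq> E"
    proof
      fix y assume y: "y \<in> K0"
      have "U y \<in> K0" using y RU[of y] bcl_zero[OF bU] by (simp add: K0_def)
      then show "y \<in> E" using y SK0 bcl_zero[OF bU'] by (simp add: E_def)
    qed
    have "x = PK x + (x - PK x)" by simp
    moreover have "PK x \<in> E" using kE PKK0 by blast
    moreover have "x - PK x \<in> E" using hE hproj_orth[OF clK0, of x] by (auto simp: PK_def)
    ultimately have "x \<in> E" by (metis hsub_add[OF clE(2)])
    then show ?thesis by (simp add: E_def)
  qed
  have WPK: "W' (PK x) = - W (PK x)" for x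
  proof -
    have "B (PK x) = 0" using PKK0 kerRB by (simp add: K0_def)
    then show ?thesis unfolding B_def by (simp add: add_eq_0_iff)
  qed
  have WWPK: "W (W (PK x)) = - PK x" for x
  proof -
    have "- W (W (PK x)) = PK x" using WW'[of "PK x"] WPK[of x] by (simp add: bcl_minus[OF bW])
    then have "- (- W (W (PK x))) = - PK x" by (rule arg_cong)
    then show ?thesis by simp
  qed
  define Z where "Z = (\<lambda>x. S x + \<i> *\<^sub>C W (PK x))"
  have bZ: "bounded_clinear Z" unfolding Z_def
    by (intro bcl_add_fun bS bcl_scaleC_fun bcl_comp'[OF bW bPK])
  have sZ: "cinner (Z x) y = cinner x (Z y)" for x y
  proof -
    have s1: "cinner (S x) y = cinner x (S y)" unfolding S_def P1_def P2_def
      by (simp add: cinner_diff_left cinner_diff_right hproj_selfadj[OF clV1] hproj_selfadj[OF clV2])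
    have "cinner (W (PK x)) y = cinner (PK x) (W' y)" by (rule iW)
    also have "\<dots> = cinner x (PK (W' y))" unfolding PK_def by (rule hproj_selfadj[OF clK0])
    also have "\<dots> = cinner x (- W (PK y))" using W'c[of y] WPK[of y] by simp
    finally have s2: "cinner (\<i> *\<^sub>C W (PK x)) y = cinner x (\<i> *\<^sub>C W (PK y))"
      by (simp add: cinner_scaleC_left cinner_scaleC_right cinner_minus_right)
    show ?thesis unfolding Z_def using s1 s2 by (simp add: cinner_add_left cinner_add_right)
  qed
  have ZZ: "Z (Z x) = x" for x
  proof -
    have a: "P1 (Z x) = P1 x" unfolding Z_def S_def
      by (simp add: bcl_add[OF bP1] bcl_diff[OF bP1] bcl_scaleC[OF bP1] P1P1 P1P2 WP1 WP2 WPKc P1PK bcl_zero[OF bW])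
    have b: "P2 (Z x) = - P2 x" unfolding Z_def S_def
      by (simp add: bcl_add[OF bP2] bcl_diff[OF bP2] bcl_scaleC[OF bP2] P2P2 P2P1 WP1 WP2 WPKc P2PK bcl_zero[OF bW])
    have c: "PK (Z x) = \<i> *\<^sub>C W (PK x)" unfolding Z_def S_def
      by (simp add: bcl_add[OF bPK] bcl_diff[OF bPK] bcl_scaleC[OF bPK] PKP1 PKP2 WP1 WP2 WPKc PKPK)
    have m1: "(-1::complex) *\<^sub>C y = - y" for y :: 'h
      using scaleR_scaleC[of "-1" y] by simp
    have d: "\<i> *\<^sub>C W (\<i> *\<^sub>C W (PK x)) = PK x"
      by (simp add: bcl_scaleC[OF bW] scaleC_scaleC WWPK scaleC_minus_right m1)
    have "Z (Z x) = (P1 (Z x) - P2 (Z x)) + \<i> *\<^sub>C W (PK (Z x))"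
      by (simp only: Z_def[THEN fun_cong[where x="Z x"]] S_def)
    also have "\<dots> = P1 x + P2 x + PK x" using a b c d by simp
    finally have "Z (Z x) = P1 x + P2 x + PK x" .
    then show ?thesis by (simp add: decomp)
  qed
  have ZU: "Z (U x) = U' (Z x)" for x
  proof -
    have "W (PK (U x)) = U' (W (PK x))" by (simp add: UPK[symmetric] U'W)
    then show ?thesis unfolding Z_def by (simp add: SU bcl_add[OF bU'] bcl_scaleC[OF bU'])
  qed
  have adjZ: "adj Z = Z" by (rule adj_eq[OF bZ sZ])
  have symZ: "symmetry Z"
    unfolding symmetry_def unitary_def using bZ adjZ ZZ by (simp add: fun_eq_iff)
  have ZM: "Z \<in> M"
  proof (rule in_vN[OF vN bZ])
    fix T x assume T: "T \<in> commutant M"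
    have bT: "bounded_clinear T" using T by (simp add: commutant_def)
    show "Z (T x) = T (Z x)" unfolding Z_def S_def
      using Tc[OF T, of x] vN_comm[OF vN WM T, of "PK x"]
      by (simp add: bcl_add[OF bT] bcl_diff[OF bT] bcl_scaleC[OF bT])
  qed
  define Z2 where "Z2 = Z \<circ> U"
  have bZ2: "bounded_clinear Z2" unfolding Z2_def by (rule bcl_comp[OF bZ bU])
  have sZ2: "cinner (Z2 x) y = cinner x (Z2 y)" for x y
  proof -
    have "cinner (Z (U x)) y = cinner (U x) (Z y)" by (rule sZ)
    also have "\<dots> = cinner x (U' (Z y))" by (rule iU)
    also have "\<dots> = cinner x (Z (U y))" by (simp only: ZU)
    finally show ?thesis unfolding Z2_def by simp
  qed
  have Z2Z2: "Z2 (Z2 x) = x" for x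
  proof -
    have "U (Z (U x)) = Z x" by (simp add: ZU UU')
    then show ?thesis unfolding Z2_def by (simp add: ZZ)
  qed
  have symZ2: "symmetry Z2"
    unfolding symmetry_def unitary_def using bZ2 adj_eq[OF bZ2 sZ2] Z2Z2 by (simp add: fun_eq_iff)
  have Z2M: "Z2 \<in> M"
  proof (rule in_vN[OF vN bZ2])
    fix T x assume T: "T \<in> commutant M"
    have "Z (T (U x)) = T (Z (U x))"
    proof -
      have bT: "bounded_clinear T" using T by (simp add: commutant_def)
      show ?thesis unfolding Z_def S_def
        using Tc[OF T, of "U x"] vN_comm[OF vN WM T, of "PK (U x)"]
        by (simp add: bcl_add[OF bT] bcl_diff[OF bT] bcl_scaleC[OF bT])
    qed
    then show "Z2 (T x) = T (Z2 x)" unfolding Z2_def using vN_comm[OF vN UM T, of x] by simp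
  qed
  have "U = Z \<circ> Z2" unfolding Z2_def by (simp add: fun_eq_iff ZZ)
  then show ?thesis using ZM Z2M symZ symZ2 by blast
qed


theorem proposition4p1:
  fixes M :: "('h::chilbert_space \<Rightarrow> 'h) set" and U :: "'h \<Rightarrow> 'h"
  assumes "von_neumann_algebra M" and "U \<in> M" and "unitary U"
  shows "(\<exists>S1\<in>M. \<exists>S2\<in>M. symmetry S1 \<and> symmetry S2 \<and> U = S1 \<circ> S2) \<longleftrightarrow>
         (\<exists>W\<in>M. unitary W \<and> adj U = adj W \<circ> U \<circ> W)"
proof
  assume "\<exists>S1\<in>M. \<exists>S2\<in>M. symmetry S1 \<and> symmetry S2 \<and> U = S1 \<circ> S2"
  then obtain S1 S2 where S1M: "S1 \<in> M" and S2M: "S2 \<in> M" and sy1: "symmetry S1" and sy2: "symmetry S2"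
    and U: "U = S1 \<circ> S2" by blast
  have u1: "unitary S1" and a1: "adj S1 = S1" using sy1 by (auto simp: symmetry_def)
  have u2: "unitary S2" and a2: "adj S2 = S2" using sy2 by (auto simp: symmetry_def)
  have b1: "bounded_clinear S1" using unitary_D(1)[OF u1] .
  have b2: "bounded_clinear S2" using unitary_D(1)[OF u2] .
  have i1: "cinner (S1 x) y = cinner x (S1 y)" for x y using adj_prop(2)[OF b1, of x y] a1 by simp
  have i2: "cinner (S2 x) y = cinner x (S2 y)" for x y using adj_prop(2)[OF b2, of x y] a2 by simp
  have s11: "S1 (S1 x) = x" for x using unitary_D(2)[OF u1, of x] a1 by simp
  have bU: "bounded_clinear U" using unitary_D(1)[OF assms(3)] .
  have "adj U = S2 \<circ> S1"
  proof (rule adj_eq[OF bU])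
    fix x y
    have "cinner (S1 (S2 x)) y = cinner (S2 x) (S1 y)" by (rule i1)
    also have "\<dots> = cinner x (S2 (S1 y))" by (rule i2)
    finally show "cinner (U x) y = cinner x ((S2 \<circ> S1) y)" by (simp add: U)
  qed
  moreover have "adj S1 \<circ> U \<circ> S1 = S2 \<circ> S1" by (simp add: a1 U fun_eq_iff s11)
  ultimately have "adj U = adj S1 \<circ> U \<circ> S1" by simp
  then show "\<exists>W\<in>M. unitary W \<and> adj U = adj W \<circ> U \<circ> W" using S1M u1 by blast
next
  assume "\<exists>W\<in>M. unitary W \<and> adj U = adj W \<circ> U \<circ> W"
  then obtain W where "W \<in> M" "unitary W" "adj U = adj W \<circ> U \<circ> W" by blast
  then show "\<exists>S1\<in>M. \<exists>S2\<in>M. symmetry S1 \<and> symmetry S2 \<and> U = S1 \<circ> S2"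
    using backward[OF assms] by blast
qed


end
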